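(* For every $\mu\in\mathrm{Prob}(\mathcal{X}^n)$ with marginals $\mu_1,\dots,\mu_n\in\mathrm{Prob}(\mathcal{X})$, $$\mathcal{I}_\mathrm{sym}(\mu)=I_\mathrm{sym}(\mu)=-S(\mu)+\sum_{i=1}^nS(\mu_i).$$
   Context: $\mathcal{X}=\{t_1,\dots,t_d\}$ is a finite set with a fixed order $t_1<\dots<t_d$; $n\in\mathbb{N}$. $\mathrm{Prob}(\mathcal{X}^k)$ is the set of probability measures on $\mathcal{X}^k$, $C_\mathbb{R}(\mathcal{X}^n)$ the real functions on $\mathcal{X}^n$; $\mu(h)=\sum_\mathbf{x}h(\mathbf{x})\mu(\mathbf{x})$; $\mu_i$ is the $i$th marginal. Shannon entropy: $S(\mu)=-\sum_t\mu(t)\log\mu(t)$. For a sequence $\mathbf{x}=(x_1,\dots,x_N)$ over a finite set $A$ (here $A=\mathcal{X}$ or $\mathcal{X}^n$), its type is $\nu_\mathbf{x}(t)=\#\{j:x_j=t\}/N$, $t\in A$; for $\mu\in\mathrm{Prob}(A)$, $\Delta(\mu;N,\delta)$ is the set of $\mathbf{x}\in A^N$ with $|\nu_\mathbf{x}(t)-\mu(t)|<\delta$ for all $t\in A$; an $n$-tuple $(\mathbf{x}_1,\dots,\mathbf{x}_n)\in(\mathcal{X}^N)^n$ is identified with the sequence $((x_{1j},\dots,x_{nj}))_{j=1}^N\in(\mathcal{X}^n)^N$. $\mathcal{X}_\le^N$ is the set of sequences in $\mathcal{X}^N$ of the form $(t_1,\dots,t_1,\dots,t_d,\dots,t_d)$.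 $S_N$ acts by $\sigma(\mathbf{x})=(x_{\sigma^{-1}(1)},\dots,x_{\sigma^{-1}(N)})$; $\gamma_{S_N}$ is uniform probability on $S_N$. An approximating sequence for $(\mu_1,\dots,\mu_n)$ is $\Xi(N)=(\xi_1(N),\dots,\xi_n(N))$ with $\xi_i(N)\in\mathcal{X}_\le^N$ and $\nu_{\xi_i(N)}(t)\to\mu_i(t)$ for all $t$. $\Delta_\mathrm{sym}(\mu:\Xi(N);N,\delta)$ is the set of $(\sigma_1,\dots,\sigma_n)\in S_N^n$ with $(\sigma_1(\xi_1(N)),\dots,\sigma_n(\xi_n(N)))\in\Delta(\mu;N,\delta)$, and $I_\mathrm{sym}(\mu)=-\lim_{\delta\searrow0}\limsup_{N\to\infty}\frac1N\log\gamma_{S_N}^{\otimes n}(\Delta_\mathrm{sym}(\mu:\Xi(N);N,\delta))$. For $h\in C_\mathbb{R}(\mathcal{X}^n)$, $\kappa_N(h(\mathbf{x}_1,\dots,\mathbf{x}_n))=\frac1N\sum_{j=1}^Nh(x_{1j},\dots,x_{nj})$, the mutual pressure is $$P_\mathrm{sym}(h:\mu_1,\dots,\mu_n)=\limsup_{N\to\infty}\frac1N\log\Biggl[\frac1{(N!)^n}\sum_{\sigma_1,\dots,\sigma_n\in S_N}\exp\bigl(N\kappa_N(h(\sigma_1(\xi_1(N)),\dots,\sigma_n(\xi_n(N))))\bigr)\Biggr],$$ and $\mathcal{I}_\mathrm{sym}(\mu)=\sup\{\mu(h)-P_\mathrm{sym}(h:\mu_1,\dots,\mu_n):h\in C_\mathbb{R}(\mathcal{X}^n)\}$.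 These do not depend on the approximating sequence. *)

theory Defs
  imports "HOL-Analysis.Analysis" "HOL-Combinatorics.Permutations"
begin

text \<open>The finite ordered alphabet X is a type 'a :: {finite, linorder}; the index set
{1..n} is a finite type 'i (so X^n is 'i \<Rightarrow> 'a). Sequences of length N over A
are functions nat \<Rightarrow> A, indices 0..N-1.\<close>

definition is_prob :: "('b::finite \<Rightarrow> real) \<Rightarrow> bool" where
  "is_prob \<mu> \<longleftrightarrow> (\<forall>x. \<mu> x \<ge> 0) \<and> (\<Sum>x\<in>UNIV. \<mu> x) = 1"

definition marginal :: "(('i::finite \<Rightarrow> 'a::finite) \<Rightarrow> real) \<Rightarrow> 'i \<Rightarrow> 'a \<Rightarrow> real" where
  "marginal \<mu> i t = (\<Sum>x\<in>{x. x i = t}. \<mu> x)"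

definition entropy :: "('b::finite \<Rightarrow> real) \<Rightarrow> real" where
  "entropy \<mu> = - (\<Sum>t\<in>UNIV. \<mu> t * ln (\<mu> t))"

definition seq_type :: "nat \<Rightarrow> (nat \<Rightarrow> 'b) \<Rightarrow> 'b \<Rightarrow> real" where
  "seq_type N x t = real (card {j\<in>{..<N}. x j = t}) / real N"

definition Delta :: "('b \<Rightarrow> real) \<Rightarrow> nat \<Rightarrow> real \<Rightarrow> (nat \<Rightarrow> 'b) set" where
  "Delta \<mu> N \<delta> = {x \<in> {..<N} \<rightarrow>\<^sub>E UNIV. \<forall>t. \<bar>seq_type N x t - \<mu> t\<bar> < \<delta>}"

definition sorted_seq :: "nat \<Rightarrow> (nat \<Rightarrow> 'a::linorder) \<Rightarrow> bool" where
  "sorted_seq N x \<longleftrightarrow> x \<in> {..<N} \<rightarrow>\<^sub>E UNIV \<and> (\<forall>i j. i \<le> j \<and> j < N \<longrightarrow> x i \<le> x j)"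

definition perms :: "nat \<Rightarrow> (nat \<Rightarrow> nat) set" where
  "perms N = {\<sigma>. \<sigma> permutes {..<N}}"

definition perm_act :: "nat \<Rightarrow> (nat \<Rightarrow> nat) \<Rightarrow> (nat \<Rightarrow> 'b) \<Rightarrow> nat \<Rightarrow> 'b" where
  "perm_act N \<sigma> x = (\<lambda>j. if j < N then x (inv \<sigma> j) else undefined)"

definition combine :: "nat \<Rightarrow> ('i \<Rightarrow> nat \<Rightarrow> 'a) \<Rightarrow> nat \<Rightarrow> ('i \<Rightarrow> 'a)" where
  "combine N xs = (\<lambda>j. if j < N then (\<lambda>i. xs i j) else undefined)"

definition approx_seq :: "('i \<Rightarrow> 'a::linorder \<Rightarrow> real) \<Rightarrow> (nat \<Rightarrow> 'i \<Rightarrow> nat \<Rightarrow> 'a) \<Rightarrow> bool" where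
  "approx_seq \<mu>s \<Xi> \<longleftrightarrow> (\<forall>N i. sorted_seq N (\<Xi> N i)) \<and>
     (\<forall>i t. (\<lambda>N. seq_type N (\<Xi> N i) t) \<longlonglongrightarrow> \<mu>s i t)"

definition Delta_sym :: "(('i::finite \<Rightarrow> 'a) \<Rightarrow> real) \<Rightarrow> (nat \<Rightarrow> 'i \<Rightarrow> nat \<Rightarrow> 'a) \<Rightarrow> nat \<Rightarrow> real
     \<Rightarrow> ('i \<Rightarrow> nat \<Rightarrow> nat) set" where
  "Delta_sym \<mu> \<Xi> N \<delta> = {\<sigma>s \<in> (UNIV::'i set) \<rightarrow>\<^sub>E perms N.
      combine N (\<lambda>i. perm_act N (\<sigma>s i) (\<Xi> N i)) \<in> Delta \<mu> N \<delta>}"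

definition eln :: "real \<Rightarrow> ereal" where
  "eln x = (if x > 0 then ereal (ln x) else - \<infinity>)"

text \<open>Uniform product probability gamma_{S_N}^{tensor n} of Delta_sym.\<close>
definition gamma_sym :: "(('i::finite \<Rightarrow> 'a) \<Rightarrow> real) \<Rightarrow> (nat \<Rightarrow> 'i \<Rightarrow> nat \<Rightarrow> 'a) \<Rightarrow> nat \<Rightarrow> real \<Rightarrow> real" where
  "gamma_sym \<mu> \<Xi> N \<delta> = real (card (Delta_sym \<mu> \<Xi> N \<delta>)) / (fact N) ^ CARD('i)"

definition I_sym :: "(('i::finite \<Rightarrow> 'a) \<Rightarrow> real) \<Rightarrow> (nat \<Rightarrow> 'i \<Rightarrow> nat \<Rightarrow> 'a) \<Rightarrow> ereal" where
  "I_sym \<mu> \<Xi> = - Lim (at_right (0::real))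
      (\<lambda>\<delta>. limsup (\<lambda>N. ereal (1 / real N) * eln (gamma_sym \<mu> \<Xi> N \<delta>)))"

definition P_sym :: "(('i::finite \<Rightarrow> 'a) \<Rightarrow> real) \<Rightarrow> (nat \<Rightarrow> 'i \<Rightarrow> nat \<Rightarrow> 'a) \<Rightarrow> ereal" where
  "P_sym h \<Xi> = limsup (\<lambda>N. ereal ((1 / real N) * ln ((1 / (fact N) ^ CARD('i)) *
      (\<Sum>\<sigma>s\<in>(UNIV::'i set) \<rightarrow>\<^sub>E perms N.
         exp (\<Sum>j<N. h (combine N (\<lambda>i. perm_act N (\<sigma>s i) (\<Xi> N i)) j))))))"

definition calI_sym :: "(('i::finite \<Rightarrow> 'a::finite) \<Rightarrow> real) \<Rightarrow> (nat \<Rightarrow> 'i \<Rightarrow> nat \<Rightarrow> 'a) \<Rightarrow> ereal" where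
  "calI_sym \<mu> \<Xi> = (SUP h. ereal (\<Sum>x\<in>UNIV. h x * \<mu> x) - P_sym h \<Xi>)"

end

theory Submission
  imports Defs "HOL-Combinatorics.Multiset_Permutations" "HOL-Real_Asymp.Real_Asymp"
begin

lemma ln_ge_1_minus_inv: "0 < (x::real) \<Longrightarrow> 1 - 1/x \<le> ln x"
proof -
  assume x: "0 < x"
  have "ln (1/x) \<le> 1/x - 1" using x by (intro ln_le_minus_one) auto
  thus ?thesis using x by (simp add: ln_div)
qed

lemma ln_fact_lower: "real n * ln (real n) - real n \<le> ln (fact n)"
proof (induction n)
  case 0 then show ?case by simp
next
  case (Suc n)
  show ?case
  proof (cases "n = 0")
    case True then show ?thesis by simp
  next
    case False
    hence n: "real n > 0" by simp
    have "ln (1 + 1/real n) \<le> 1 / real n" using n by (intro ln_add_one_self_le_self) auto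
    moreover have "1 + 1/real n = real (Suc n) / real n" using n by (simp add: field_simps)
    ultimately have "ln (real (Suc n)) - ln (real n) \<le> 1 / real n" using n by (simp add: ln_div)
    hence A: "real n * ln (real (Suc n)) \<le> real n * ln (real n) + 1" using n by (simp add: field_simps)
    have "ln (fact (Suc n)) = ln (real (Suc n)) + ln (fact n)"
      by (simp add: ln_mult fact_Suc del: of_nat_Suc)
    thus ?thesis using Suc.IH A by (simp add: algebra_simps)
  qed
qed

lemma ln_fact_upper: "ln (fact n) \<le> real n * ln (real n) - real n + 1 + ln (real n)"
proof (induction n)
  case 0 then show ?case by simp
next
  case (Suc n)
  show ?case
  proof (cases "n = 0")
    case True then show ?thesis by simp
  next
    case False
    hence n: "real n > 0" by simp
    have "1 - 1 / (real (Suc n) / real n) \<le> ln (real (Suc n) / real n)"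
      using n by (intro ln_ge_1_minus_inv) auto
    moreover have "1 - 1 / (real (Suc n) / real n) = 1 / real (Suc n)" using n by (simp add: field_simps)
    ultimately have "1 / real (Suc n) \<le> ln (real (Suc n)) - ln (real n)" using n by (simp add: ln_div)
    hence A: "1 + real (Suc n) * ln (real n) \<le> real (Suc n) * ln (real (Suc n))"
      by (simp add: field_simps del: of_nat_Suc)
    have "ln (fact (Suc n)) = ln (real (Suc n)) + ln (fact n)"
      by (simp add: ln_mult fact_Suc del: of_nat_Suc)
    thus ?thesis using Suc.IH A by (simp add: algebra_simps)
  qed
qed

lemma entropy_counts:
  fixes c :: "'b::finite \<Rightarrow> nat"
  assumes "(\<Sum>t\<in>UNIV. c t) = N"
  shows "real N * entropy (\<lambda>t. real (c t) / real N) = real N * ln (real N) - (\<Sum>t\<in>UNIV. real (c t) * ln (real (c t)))"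
proof (cases "N = 0")
  case True
  hence "\<And>t. c t = 0" using assms by simp
  thus ?thesis using True by (simp add: entropy_def)
next
  case False
  have "real N * entropy (\<lambda>t. real (c t) / real N) = (\<Sum>t\<in>UNIV. - (real (c t) * (ln (real (c t)) - ln (real N))))"
    unfolding entropy_def mult_minus_right sum_distrib_left sum_negf[symmetric]
    by (intro sum.cong refl arg_cong[where f=uminus]) (use False in \<open>auto simp: ln_div\<close>)
  also have "\<dots> = real N * ln (real N) - (\<Sum>t\<in>UNIV. real (c t) * ln (real (c t)))"
    by (simp add: algebra_simps sum_subtractf sum_distrib_right[symmetric] assms flip: of_nat_sum)
  finally show ?thesis .
qed

lemma multiset_card_bounds:
  fixes C :: "'b::finite multiset"
  assumes N: "size C = N" "N > 0"
  shows "real N * entropy (\<lambda>t. real (count C t) / real N) - real CARD('b) * (1 + ln (real N))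
           \<le> ln (real (card (permutations_of_multiset C)))"
    and "ln (real (card (permutations_of_multiset C))) \<le> real N * entropy (\<lambda>t. real (count C t) / real N) + 1 + ln (real N)"
proof -
  have sumc: "(\<Sum>t\<in>UNIV. count C t) = N"
  proof -
    have "(\<Sum>t\<in>UNIV. count C t) = (\<Sum>t\<in>set_mset C. count C t)"
      by (intro sum.mono_neutral_right) (auto simp: not_in_iff)
    thus ?thesis using N by (simp add: size_multiset_overloaded_eq)
  qed
  have prodeq: "(\<Prod>x\<in>set_mset C. fact (count C x)) = (\<Prod>x\<in>UNIV. fact (count C x) :: nat)"
    by (intro prod.mono_neutral_left) (auto simp: not_in_iff)
  have "real (card (permutations_of_multiset C)) * (\<Prod>x\<in>UNIV. fact (count C x)) = fact N"
  proof -
    have "card (permutations_of_multiset C) * (\<Prod>x\<in>UNIV. fact (count C x)) = fact N"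
      using card_permutations_of_multiset_aux[of C] N prodeq by simp
    hence "real (card (permutations_of_multiset C) * (\<Prod>x\<in>UNIV. fact (count C x))) = real (fact N)"
      by simp
    thus ?thesis by (simp add: of_nat_prod)
  qed
  hence L: "ln (real (card (permutations_of_multiset C))) = ln (fact N) - (\<Sum>x\<in>UNIV. ln (fact (count C x)))"
  proof -
    assume h: "real (card (permutations_of_multiset C)) * (\<Prod>x\<in>UNIV. fact (count C x)) = fact N"
    have pos: "(\<Prod>x\<in>UNIV. fact (count C x) :: real) > 0" by (intro prod_pos) auto
    have cpos: "real (card (permutations_of_multiset C)) > 0"
      by (simp add: card_gt_0_iff)
    have "ln (fact N) = ln (real (card (permutations_of_multiset C))) + ln (\<Prod>x\<in>UNIV. fact (count C x) :: real)"
      using h[symmetric] cpos pos by (simp add: ln_mult)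
    also have "ln (\<Prod>x\<in>UNIV. fact (count C x) :: real) = (\<Sum>x\<in>UNIV. ln (fact (count C x)))"
      by (intro ln_prod) auto
    finally show ?thesis by simp
  qed
  have E: "real N * entropy (\<lambda>t. real (count C t) / real N) = real N * ln (real N) - (\<Sum>t\<in>UNIV. real (count C t) * ln (real (count C t)))"
    by (rule entropy_counts[OF sumc])
  have sr: "(\<Sum>t\<in>UNIV. real (count C t)) = real N" using sumc by (simp flip: of_nat_sum)
  have cleN: "\<And>t. ln (real (count C t)) \<le> ln (real N)"
  proof -
    fix t
    have "count C t \<le> N" unfolding sumc[symmetric] by (rule member_le_sum) auto
    thus "ln (real (count C t)) \<le> ln (real N)"
      by (cases "count C t = 0") (use N in auto)
  qed
  have "(\<Sum>x\<in>UNIV. ln (fact (count C x))) \<le> (\<Sum>x\<in>UNIV. real (count C x) * ln (real (count C x)) - real (count C x) + 1 + ln (real N))"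
    by (intro sum_mono) (use ln_fact_upper cleN in \<open>fastforce intro: add_mono order.trans\<close>)
  also have "\<dots> = (\<Sum>x\<in>UNIV. real (count C x) * ln (real (count C x))) - real N + real CARD('b) * (1 + ln (real N))"
    by (simp add: sum.distrib sum_subtractf sr algebra_simps)
  finally have U: "(\<Sum>x\<in>UNIV. ln (fact (count C x))) \<le> \<dots>" .
  show "real N * entropy (\<lambda>t. real (count C t) / real N) - real CARD('b) * (1 + ln (real N))
           \<le> ln (real (card (permutations_of_multiset C)))"
    using L E U ln_fact_lower[of N] by linarith
  have "(\<Sum>x\<in>UNIV. real (count C x) * ln (real (count C x)) - real (count C x)) \<le> (\<Sum>x\<in>UNIV. ln (fact (count C x)))"
    by (intro sum_mono ln_fact_lower)
  hence U2: "(\<Sum>x\<in>UNIV. real (count C x) * ln (real (count C x))) - real N \<le> (\<Sum>x\<in>UNIV. ln (fact (count C x)))"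
    by (simp add: sum_subtractf sr)
  show "ln (real (card (permutations_of_multiset C))) \<le> real N * entropy (\<lambda>t. real (count C t) / real N) + 1 + ln (real N)"
    using L E U2 ln_fact_upper[of N] by linarith
qed


lemma card_eq_count_mset:
  "card {j\<in>{..<N}. u j = t} = count (mset (map u [0..<N])) t"
proof (induction N)
  case 0 then show ?case by simp
next
  case (Suc N)
  show ?case
  proof (cases "u N = t")
    case True
    hence "{j\<in>{..<Suc N}. u j = t} = insert N {j\<in>{..<N}. u j = t}" by (auto simp: less_Suc_eq)
    moreover have "card (insert N {j\<in>{..<N}. u j = t}) = Suc (card {j\<in>{..<N}. u j = t})"
      by (rule card_insert_disjoint) auto
    ultimately show ?thesis using Suc True by simp
  next
    case False
    hence "{j\<in>{..<Suc N}. u j = t} = {j\<in>{..<N}. u j = t}" by (auto simp: less_Suc_eq)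
    thus ?thesis using Suc False by simp
  qed
qed

lemma seq_type_mset: "seq_type N u t = real (count (mset (map u [0..<N])) t) / real N"
  unfolding seq_type_def card_eq_count_mset ..

definition Seqs :: "nat \<Rightarrow> 'b multiset \<Rightarrow> (nat \<Rightarrow> 'b) set" where
  "Seqs N M = {u \<in> {..<N} \<rightarrow>\<^sub>E UNIV. mset (map u [0..<N]) = M}"

definition fromlist :: "nat \<Rightarrow> 'b list \<Rightarrow> nat \<Rightarrow> 'b" where
  "fromlist N xs = (\<lambda>j. if j < N then xs ! j else undefined)"

lemma fromlist_PiE: "fromlist N xs \<in> {..<N} \<rightarrow>\<^sub>E UNIV"
  by (rule PiE_I) (auto simp: fromlist_def)

lemma map_fromlist: "length xs = N \<Longrightarrow> map (fromlist N xs) [0..<N] = xs"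
  by (auto simp: fromlist_def intro: nth_equalityI)

lemma PiE_eqI_lt: "u \<in> {..<N} \<rightarrow>\<^sub>E UNIV \<Longrightarrow> v \<in> {..<N} \<rightarrow>\<^sub>E UNIV \<Longrightarrow> (\<And>j. j < N \<Longrightarrow> u j = v j) \<Longrightarrow> u = v"
  by (rule PiE_ext) auto

lemma inj_on_map_upt: "inj_on (\<lambda>u. map u [0..<N]) ({..<N} \<rightarrow>\<^sub>E UNIV)"
proof (rule inj_onI)
  fix u v assume u: "u \<in> {..<N} \<rightarrow>\<^sub>E UNIV" and v: "v \<in> {..<N} \<rightarrow>\<^sub>E UNIV"
    and e: "map u [0..<N] = map v [0..<N]"
  show "u = v"
  proof (rule PiE_eqI_lt[OF u v])
    fix j assume "j < N"
    thus "u j = v j" using arg_cong[OF e, of "\<lambda>xs. xs ! j"] by simp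
  qed
qed

lemma card_Seqs: "size M = N \<Longrightarrow> card (Seqs N M) = card (permutations_of_multiset M)"
proof -
  assume sM: "size M = N"
  have "(\<lambda>u. map u [0..<N]) ` Seqs N M = permutations_of_multiset M"
  proof
    show "(\<lambda>u. map u [0..<N]) ` Seqs N M \<subseteq> permutations_of_multiset M"
      unfolding Seqs_def permutations_of_multiset_def by blast
    show "permutations_of_multiset M \<subseteq> (\<lambda>u. map u [0..<N]) ` Seqs N M"
    proof
      fix xs assume "xs \<in> permutations_of_multiset M"
      hence xs: "mset xs = M" by (simp add: permutations_of_multiset_def)
      have l: "length xs = N" using sM xs size_mset[of xs] by simp
      show "xs \<in> (\<lambda>u. map u [0..<N]) ` Seqs N M"
      proof (rule image_eqI[of _ _ "fromlist N xs"])
        show "xs = map (fromlist N xs) [0..<N]" by (rule map_fromlist[OF l, symmetric])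
        have "mset (map (fromlist N xs) [0..<N]) = M" using xs by (simp only: map_fromlist[OF l])
        thus "fromlist N xs \<in> Seqs N M" unfolding Seqs_def mem_Collect_eq using fromlist_PiE by (rule conjI[rotated])
      qed
    qed
  qed
  moreover have "inj_on (\<lambda>u. map u [0..<N]) (Seqs N M)"
    by (rule inj_on_subset[OF inj_on_map_upt]) (auto simp: Seqs_def)
  ultimately show ?thesis using card_image[of "\<lambda>u. map u [0..<N]" "Seqs N M"] by simp
qed

lemma perm_act_PiE: "perm_act N \<sigma> x \<in> {..<N} \<rightarrow>\<^sub>E UNIV"
  by (rule PiE_I) (auto simp: perm_act_def)

lemma perm_act_comp:
  assumes "\<sigma> permutes {..<N}" "\<tau> permutes {..<N}"
  shows "perm_act N (\<sigma> \<circ> \<tau>) x = perm_act N \<sigma> (perm_act N \<tau> x)"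
proof
  fix j
  have "inv (\<sigma> \<circ> \<tau>) = inv \<tau> \<circ> inv \<sigma>"
    using permutes_bij[OF assms(1)] permutes_bij[OF assms(2)] by (rule o_inv_distrib)
  hence e: "inv (\<sigma> \<circ> \<tau>) j = inv \<tau> (inv \<sigma> j)" by simp
  show "perm_act N (\<sigma> \<circ> \<tau>) x j = perm_act N \<sigma> (perm_act N \<tau> x) j"
  proof (cases "j < N")
    case True
    hence "inv \<sigma> j < N"
      using permutes_in_image[OF permutes_inv[OF assms(1)]] by simp
    thus ?thesis using True unfolding perm_act_def e by simp
  next
    case False thus ?thesis unfolding perm_act_def by simp
  qed
qed

lemma perm_act_id: "x \<in> {..<N} \<rightarrow>\<^sub>E UNIV \<Longrightarrow> perm_act N id x = x"
  by (rule PiE_eqI_lt[OF perm_act_PiE]) (auto simp: perm_act_def)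

lemma perm_act_inv_cancel:
  assumes "\<sigma> permutes {..<N}" "x \<in> {..<N} \<rightarrow>\<^sub>E UNIV"
  shows "perm_act N (inv \<sigma>) (perm_act N \<sigma> x) = x"
proof -
  have "perm_act N (inv \<sigma>) (perm_act N \<sigma> x) = perm_act N (inv \<sigma> \<circ> \<sigma>) x"
    by (rule perm_act_comp[symmetric, OF permutes_inv[OF assms(1)] assms(1)])
  also have "inv \<sigma> \<circ> \<sigma> = id" using assms(1) by (simp add: permutes_inv_o)
  finally show ?thesis using perm_act_id[OF assms(2)] by (simp add: id_def)
qed

definition orb :: "nat \<Rightarrow> (nat \<Rightarrow> 'b) \<Rightarrow> (nat \<Rightarrow> 'b) set" where
  "orb N \<xi> = (\<lambda>\<sigma>. perm_act N \<sigma> \<xi>) ` perms N"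

definition fib :: "nat \<Rightarrow> (nat \<Rightarrow> 'b) \<Rightarrow> (nat \<Rightarrow> 'b) \<Rightarrow> (nat \<Rightarrow> nat) set" where
  "fib N \<xi> v = {\<sigma> \<in> perms N. perm_act N \<sigma> \<xi> = v}"

lemma finite_perms: "finite (perms N)"
  unfolding perms_def by (rule finite_permutations) simp

lemma card_perms: "card (perms N) = fact N"
  unfolding perms_def by (rule card_permutations) auto

lemma map_perm_act:
  assumes "\<sigma> permutes {..<N}"
  shows "map (perm_act N \<sigma> \<xi>) [0..<N] = permute_list (inv \<sigma>) (map \<xi> [0..<N])"
proof -
  have "\<And>j. j < N \<Longrightarrow> inv \<sigma> j < N"
    using permutes_in_image[OF permutes_inv[OF assms]] by simp
  thus ?thesis by (auto simp: permute_list_def perm_act_def intro!: nth_equalityI)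
qed

lemma orb_eq_Seqs:
  assumes \<xi>: "\<xi> \<in> {..<N} \<rightarrow>\<^sub>E UNIV"
  shows "orb N \<xi> = Seqs N (mset (map \<xi> [0..<N]))"
proof
  show "orb N \<xi> \<subseteq> Seqs N (mset (map \<xi> [0..<N]))"
  proof
    fix v assume "v \<in> orb N \<xi>"
    then obtain \<sigma> where \<sigma>: "\<sigma> permutes {..<N}" and v: "v = perm_act N \<sigma> \<xi>"
      by (auto simp: orb_def perms_def)
    have "mset (map v [0..<N]) = mset (map \<xi> [0..<N])"
      unfolding v map_perm_act[OF \<sigma>]
      by (rule mset_permute_list) (use permutes_inv[OF \<sigma>] in simp)
    thus "v \<in> Seqs N (mset (map \<xi> [0..<N]))" by (simp add: Seqs_def v perm_act_PiE)
  qed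
  show "Seqs N (mset (map \<xi> [0..<N])) \<subseteq> orb N \<xi>"
  proof
    fix v assume "v \<in> Seqs N (mset (map \<xi> [0..<N]))"
    hence vP: "v \<in> {..<N} \<rightarrow>\<^sub>E UNIV" and m: "mset (map v [0..<N]) = mset (map \<xi> [0..<N])"
      by (auto simp: Seqs_def)
    obtain p where p: "p permutes {..<N}" and pl: "permute_list p (map \<xi> [0..<N]) = map v [0..<N]"
      using mset_eq_permutation[OF m] by auto
    have ip: "inv p permutes {..<N}" using p by (rule permutes_inv)
    have "inv (inv p) = p" using p by (simp add: permutes_inv_inv)
    hence "map (perm_act N (inv p) \<xi>) [0..<N] = map v [0..<N]"
      using map_perm_act[OF ip, of \<xi>] pl by simp
    hence "perm_act N (inv p) \<xi> = v"
      by (rule inj_onD[OF inj_on_map_upt _ perm_act_PiE vP])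
    thus "v \<in> orb N \<xi>" using ip by (auto simp: orb_def perms_def)
  qed
qed

lemma card_fib:
  assumes \<xi>: "\<xi> \<in> {..<N} \<rightarrow>\<^sub>E UNIV" and v: "v \<in> orb N \<xi>"
  shows "card (fib N \<xi> v) = card (fib N \<xi> \<xi>)"
proof -
  obtain \<sigma>0 where s0: "\<sigma>0 permutes {..<N}" and v: "v = perm_act N \<sigma>0 \<xi>"
    using v by (auto simp: orb_def perms_def)
  have is0: "inv \<sigma>0 permutes {..<N}" using s0 by (rule permutes_inv)
  have "bij_betw (\<lambda>\<tau>. \<sigma>0 \<circ> \<tau>) (fib N \<xi> \<xi>) (fib N \<xi> v)"
  proof (rule bij_betw_byWitness[where f'="\<lambda>\<rho>. inv \<sigma>0 \<circ> \<rho>"])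
    show "\<forall>a\<in>fib N \<xi> \<xi>. inv \<sigma>0 \<circ> (\<sigma>0 \<circ> a) = a"
      using s0 by (simp add: o_assoc permutes_inv_o)
    show "\<forall>a'\<in>fib N \<xi> v. \<sigma>0 \<circ> (inv \<sigma>0 \<circ> a') = a'"
      using s0 by (simp add: o_assoc permutes_inv_o)
    show "(\<circ>) \<sigma>0 ` fib N \<xi> \<xi> \<subseteq> fib N \<xi> v"
    proof
      fix r assume "r \<in> (\<circ>) \<sigma>0 ` fib N \<xi> \<xi>"
      then obtain \<tau> where r: "r = \<sigma>0 \<circ> \<tau>" and t: "\<tau> permutes {..<N}" and te: "perm_act N \<tau> \<xi> = \<xi>"
        unfolding fib_def perms_def by blast
      have "r permutes {..<N}" unfolding r by (rule permutes_compose[OF t s0])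
      moreover have "perm_act N r \<xi> = v" unfolding r v perm_act_comp[OF s0 t] te ..
      ultimately show "r \<in> fib N \<xi> v" unfolding fib_def perms_def by blast
    qed
    show "(\<circ>) (inv \<sigma>0) ` fib N \<xi> v \<subseteq> fib N \<xi> \<xi>"
    proof
      fix r assume "r \<in> (\<circ>) (inv \<sigma>0) ` fib N \<xi> v"
      then obtain \<tau> where r: "r = inv \<sigma>0 \<circ> \<tau>" and t: "\<tau> permutes {..<N}" and te: "perm_act N \<tau> \<xi> = v"
        unfolding fib_def perms_def by blast
      have "r permutes {..<N}" unfolding r by (rule permutes_compose[OF t is0])
      moreover have "perm_act N r \<xi> = \<xi>" unfolding r perm_act_comp[OF is0 t] te v
        by (rule perm_act_inv_cancel[OF s0 \<xi>])
      ultimately show "r \<in> fib N \<xi> \<xi>" unfolding fib_def perms_def by blast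
    qed
  qed
  thus ?thesis by (simp add: bij_betw_same_card)
qed

lemma finite_orb: "finite (orb N \<xi>)"
  unfolding orb_def using finite_perms by simp

lemma sum_orb:
  fixes f :: "(nat \<Rightarrow> 'b) \<Rightarrow> 'c::comm_ring_1"
  assumes \<xi>: "\<xi> \<in> {..<N} \<rightarrow>\<^sub>E UNIV"
  shows "(\<Sum>\<sigma>\<in>perms N. f (perm_act N \<sigma> \<xi>)) = of_nat (card (fib N \<xi> \<xi>)) * (\<Sum>v\<in>orb N \<xi>. f v)"
proof -
  have "(\<Sum>\<sigma>\<in>perms N. f (perm_act N \<sigma> \<xi>)) = (\<Sum>v\<in>orb N \<xi>. \<Sum>\<sigma>\<in>{\<sigma>\<in>perms N. perm_act N \<sigma> \<xi> = v}. f (perm_act N \<sigma> \<xi>))"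
    by (rule sum.group[symmetric]) (auto simp: finite_perms finite_orb orb_def)
  also have "\<dots> = (\<Sum>v\<in>orb N \<xi>. of_nat (card (fib N \<xi> \<xi>)) * f v)"
  proof (intro sum.cong refl)
    fix v assume v: "v \<in> orb N \<xi>"
    have "(\<Sum>\<sigma>\<in>{\<sigma>\<in>perms N. perm_act N \<sigma> \<xi> = v}. f (perm_act N \<sigma> \<xi>)) = (\<Sum>\<sigma>\<in>fib N \<xi> v. f v)"
      unfolding fib_def by (intro sum.cong refl) auto
    also have "\<dots> = of_nat (card (fib N \<xi> \<xi>)) * f v" using card_fib[OF \<xi> v] by simp
    finally show "(\<Sum>\<sigma>\<in>{\<sigma>\<in>perms N. perm_act N \<sigma> \<xi> = v}. f (perm_act N \<sigma> \<xi>)) = of_nat (card (fib N \<xi> \<xi>)) * f v" .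
  qed
  finally show ?thesis by (simp add: sum_distrib_left)
qed

lemma fact_eq_orb_fib:
  assumes \<xi>: "\<xi> \<in> {..<N} \<rightarrow>\<^sub>E UNIV"
  shows "fact N = card (orb N \<xi>) * card (fib N \<xi> \<xi>)"
proof -
  have "real (card (perms N)) = (\<Sum>\<sigma>\<in>perms N. (\<lambda>_. 1::real) (perm_act N \<sigma> \<xi>))" by simp
  also have "\<dots> = real (card (fib N \<xi> \<xi>)) * real (card (orb N \<xi>))" by (subst sum_orb[OF \<xi>]) simp
  finally have "real (card (perms N)) = real (card (orb N \<xi>) * card (fib N \<xi> \<xi>))" by simp
  hence "card (perms N) = card (orb N \<xi>) * card (fib N \<xi> \<xi>)" by (simp only: of_nat_eq_iff)
  thus ?thesis using card_perms[of N] by simp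
qed


lemma PiE_UNIV_iff: "f \<in> Pi\<^sub>E (UNIV::'i set) B \<longleftrightarrow> (\<forall>i. f i \<in> B i)"
  by (simp add: PiE_UNIV_domain Pi_iff)

lemma sum_prod_orb:
  fixes \<xi> :: "'i::finite \<Rightarrow> nat \<Rightarrow> 'b" and F :: "('i \<Rightarrow> nat \<Rightarrow> 'b) \<Rightarrow> real"
  assumes \<xi>: "\<And>i. \<xi> i \<in> {..<N} \<rightarrow>\<^sub>E UNIV"
  shows "(\<Sum>\<sigma>s\<in>(UNIV::'i set) \<rightarrow>\<^sub>E perms N. F (\<lambda>i. perm_act N (\<sigma>s i) (\<xi> i)))
       = (\<Prod>i\<in>UNIV. real (card (fib N (\<xi> i) (\<xi> i)))) * (\<Sum>u\<in>Pi\<^sub>E (UNIV::'i set) (\<lambda>i. orb N (\<xi> i)). F u)"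
proof -
  define g where "g = (\<lambda>\<sigma>s::'i \<Rightarrow> nat \<Rightarrow> nat. \<lambda>i. perm_act N (\<sigma>s i) (\<xi> i))"
  let ?S = "(UNIV::'i set) \<rightarrow>\<^sub>E perms N"
  let ?T = "Pi\<^sub>E (UNIV::'i set) (\<lambda>i. orb N (\<xi> i))"
  have fS: "finite ?S" by (intro finite_PiE finite_perms) auto
  have fT: "finite ?T" by (intro finite_PiE finite_orb) auto
  have gST: "g ` ?S \<subseteq> ?T"
  proof
    fix u assume "u \<in> g ` ?S"
    then obtain \<sigma>s where "\<sigma>s \<in> ?S" and u: "u = g \<sigma>s" by blast
    hence "\<forall>i. \<sigma>s i \<in> perms N" by (simp add: PiE_UNIV_iff)
    thus "u \<in> ?T" unfolding u g_def PiE_UNIV_iff orb_def by blast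
  qed
  have "(\<Sum>\<sigma>s\<in>?S. F (g \<sigma>s)) = (\<Sum>u\<in>?T. \<Sum>\<sigma>s\<in>{\<sigma>s\<in>?S. g \<sigma>s = u}. F (g \<sigma>s))"
    by (rule sum.group[OF fS fT gST, symmetric])
  also have "\<dots> = (\<Sum>u\<in>?T. (\<Prod>i\<in>UNIV. real (card (fib N (\<xi> i) (\<xi> i)))) * F u)"
  proof (rule sum.cong[OF refl])
    fix u assume u: "u \<in> ?T"
    have set: "{\<sigma>s\<in>?S. g \<sigma>s = u} = Pi\<^sub>E (UNIV::'i set) (\<lambda>i. fib N (\<xi> i) (u i))"
    proof (rule set_eqI)
      fix \<sigma>s
      show "\<sigma>s \<in> {\<sigma>s\<in>?S. g \<sigma>s = u} \<longleftrightarrow> \<sigma>s \<in> Pi\<^sub>E (UNIV::'i set) (\<lambda>i. fib N (\<xi> i) (u i))"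
        unfolding PiE_UNIV_iff mem_Collect_eq fib_def g_def fun_eq_iff[of _ u] by blast
    qed
    have "card {\<sigma>s\<in>?S. g \<sigma>s = u} = (\<Prod>i\<in>UNIV. card (fib N (\<xi> i) (u i)))"
      unfolding set by (rule card_PiE) simp
    also have "\<dots> = (\<Prod>i\<in>UNIV. card (fib N (\<xi> i) (\<xi> i)))"
    proof (rule prod.cong[OF refl])
      fix i
      have "u i \<in> orb N (\<xi> i)" using u by (simp add: PiE_UNIV_iff)
      thus "card (fib N (\<xi> i) (u i)) = card (fib N (\<xi> i) (\<xi> i))" by (rule card_fib[OF \<xi>])
    qed
    finally have c: "card {\<sigma>s\<in>?S. g \<sigma>s = u} = (\<Prod>i\<in>UNIV. card (fib N (\<xi> i) (\<xi> i)))" .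
    have "(\<Sum>\<sigma>s\<in>{\<sigma>s\<in>?S. g \<sigma>s = u}. F (g \<sigma>s)) = (\<Sum>\<sigma>s\<in>{\<sigma>s\<in>?S. g \<sigma>s = u}. F u)"
      by (rule sum.cong) auto
    also have "\<dots> = real (card {\<sigma>s\<in>?S. g \<sigma>s = u}) * F u" by simp
    finally show "(\<Sum>\<sigma>s\<in>{\<sigma>s\<in>?S. g \<sigma>s = u}. F (g \<sigma>s)) = (\<Prod>i\<in>UNIV. real (card (fib N (\<xi> i) (\<xi> i)))) * F u"
      unfolding c by (simp add: of_nat_prod)
  qed
  finally show ?thesis unfolding g_def by (simp add: sum_distrib_left)
qed

lemma xi_in_orb: "\<xi> \<in> {..<N} \<rightarrow>\<^sub>E UNIV \<Longrightarrow> \<xi> \<in> orb N \<xi>"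
  unfolding orb_def perms_def
  by (rule image_eqI[of _ _ id]) (auto simp: perm_act_id permutes_id)

lemma card_orb_pos: "\<xi> \<in> {..<N} \<rightarrow>\<^sub>E UNIV \<Longrightarrow> card (orb N \<xi>) > 0"
  using xi_in_orb finite_orb by (metis card_gt_0_iff empty_iff)

lemma avg_prod_orb:
  fixes \<xi> :: "'i::finite \<Rightarrow> nat \<Rightarrow> 'b" and F :: "('i \<Rightarrow> nat \<Rightarrow> 'b) \<Rightarrow> real"
  assumes \<xi>: "\<And>i. \<xi> i \<in> {..<N} \<rightarrow>\<^sub>E UNIV"
  shows "(1 / (fact N) ^ CARD('i)) * (\<Sum>\<sigma>s\<in>(UNIV::'i set) \<rightarrow>\<^sub>E perms N. F (\<lambda>i. perm_act N (\<sigma>s i) (\<xi> i)))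
       = (1 / (\<Prod>i\<in>UNIV. real (card (orb N (\<xi> i))))) * (\<Sum>u\<in>Pi\<^sub>E (UNIV::'i set) (\<lambda>i. orb N (\<xi> i)). F u)"
proof -
  have "(fact N :: real) ^ CARD('i) = (\<Prod>i\<in>(UNIV::'i set). fact N)" by simp
  also have "\<dots> = (\<Prod>i\<in>UNIV. real (card (orb N (\<xi> i))) * real (card (fib N (\<xi> i) (\<xi> i))))"
  proof (rule prod.cong[OF refl])
    fix i
    have "(fact N :: nat) = card (orb N (\<xi> i)) * card (fib N (\<xi> i) (\<xi> i))" by (rule fact_eq_orb_fib[OF \<xi>])
    hence "real (fact N) = real (card (orb N (\<xi> i)) * card (fib N (\<xi> i) (\<xi> i)))" by (simp only:)
    thus "(fact N :: real) = real (card (orb N (\<xi> i))) * real (card (fib N (\<xi> i) (\<xi> i)))" by simp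
  qed
  also have "\<dots> = (\<Prod>i\<in>UNIV. real (card (orb N (\<xi> i)))) * (\<Prod>i\<in>UNIV. real (card (fib N (\<xi> i) (\<xi> i))))"
    by (rule prod.distrib)
  finally have f: "(fact N :: real) ^ CARD('i) = (\<Prod>i\<in>UNIV. real (card (orb N (\<xi> i)))) * (\<Prod>i\<in>UNIV. real (card (fib N (\<xi> i) (\<xi> i))))" .
  have p1: "(\<Prod>i\<in>UNIV. real (card (orb N (\<xi> i)))) > 0"
    by (intro prod_pos) (use card_orb_pos[OF \<xi>] in simp)
  have p2: "(\<Prod>i\<in>UNIV. real (card (fib N (\<xi> i) (\<xi> i)))) > 0"
  proof (intro prod_pos)
    fix i :: 'i
    have "fact N = card (orb N (\<xi> i)) * card (fib N (\<xi> i) (\<xi> i))" by (rule fact_eq_orb_fib[OF \<xi>])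
    hence "card (fib N (\<xi> i) (\<xi> i)) \<noteq> 0" by (metis fact_nonzero mult_0_right)
    thus "0 < real (card (fib N (\<xi> i) (\<xi> i)))" by simp
  qed
  have sp: "(\<Sum>\<sigma>s\<in>(UNIV::'i set) \<rightarrow>\<^sub>E perms N. F (\<lambda>i. perm_act N (\<sigma>s i) (\<xi> i)))
       = (\<Prod>i\<in>UNIV. real (card (fib N (\<xi> i) (\<xi> i)))) * (\<Sum>u\<in>Pi\<^sub>E (UNIV::'i set) (\<lambda>i. orb N (\<xi> i)). F u)"
    by (rule sum_prod_orb[OF \<xi>])
  have aux: "\<And>A B S::real. B \<noteq> 0 \<Longrightarrow> 1/(A*B)*(B*S) = 1/A*S"
    by (simp add: field_simps)
  show ?thesis unfolding sp f by (rule aux) (use p2 in linarith)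
qed

lemma combine_PiE: "combine N u \<in> {..<N} \<rightarrow>\<^sub>E UNIV"
  by (rule PiE_I) (auto simp: combine_def)

lemma orb_PiE: "v \<in> orb N \<xi> \<Longrightarrow> v \<in> {..<N} \<rightarrow>\<^sub>E UNIV"
proof -
  assume "v \<in> orb N \<xi>"
  then obtain \<sigma> where "v = perm_act N \<sigma> \<xi>" unfolding orb_def by blast
  thus ?thesis using perm_act_PiE by simp
qed

lemma inj_on_combine:
  "inj_on (combine N) (Pi\<^sub>E (UNIV::'i set) (\<lambda>i. orb N (\<xi> i)))"
proof (rule inj_onI)
  fix u v assume u: "u \<in> Pi\<^sub>E (UNIV::'i set) (\<lambda>i. orb N (\<xi> i))" and v: "v \<in> Pi\<^sub>E (UNIV::'i set) (\<lambda>i. orb N (\<xi> i))"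
    and e: "combine N u = combine N v"
  show "u = v"
  proof
    fix i
    have ui: "u i \<in> {..<N} \<rightarrow>\<^sub>E UNIV" using u unfolding PiE_UNIV_iff by (intro orb_PiE) blast
    have vi: "v i \<in> {..<N} \<rightarrow>\<^sub>E UNIV" using v unfolding PiE_UNIV_iff by (intro orb_PiE) blast
    show "u i = v i"
    proof (rule PiE_eqI_lt[OF ui vi])
      fix j assume j: "j < N"
      have "combine N u j i = combine N v j i" using e by simp
      thus "u i j = v i j" using j by (simp add: combine_def)
    qed
  qed
qed

lemma sum_combine_le:
  fixes w :: "(nat \<Rightarrow> 'i::finite \<Rightarrow> 'b::finite) \<Rightarrow> real"
  assumes "\<And>y. w y \<ge> 0"
  shows "(\<Sum>u\<in>Pi\<^sub>E (UNIV::'i set) (\<lambda>i. orb N (\<xi> i)). w (combine N u)) \<le> (\<Sum>y\<in>{..<N} \<rightarrow>\<^sub>E UNIV. w y)"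
proof -
  have "(\<Sum>u\<in>Pi\<^sub>E (UNIV::'i set) (\<lambda>i. orb N (\<xi> i)). w (combine N u)) = (\<Sum>y\<in>combine N ` (Pi\<^sub>E (UNIV::'i set) (\<lambda>i. orb N (\<xi> i))). w y)"
    using sum.reindex[OF inj_on_combine[of N \<xi>], of w] by (simp add: o_def)
  also have "\<dots> \<le> (\<Sum>y\<in>{..<N} \<rightarrow>\<^sub>E UNIV. w y)"
    by (rule sum_mono2) (use assms combine_PiE in \<open>auto intro: finite_PiE\<close>)
  finally show ?thesis .
qed

lemma sum_exp_PiE:
  fixes h :: "'b::finite \<Rightarrow> real"
  shows "(\<Sum>y\<in>{..<N} \<rightarrow>\<^sub>E UNIV. exp (\<Sum>j<N. h (y j))) = (\<Sum>x\<in>UNIV. exp (h x)) ^ N"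
proof -
  have "(\<Sum>x\<in>UNIV. exp (h x)) ^ N = (\<Prod>j\<in>{..<N}. \<Sum>x\<in>UNIV. exp (h x))" by simp
  also have "\<dots> = (\<Sum>y\<in>{..<N} \<rightarrow>\<^sub>E UNIV. \<Prod>j\<in>{..<N}. exp (h (y j)))"
    by (rule prod_sum_PiE) auto
  also have "\<dots> = (\<Sum>y\<in>{..<N} \<rightarrow>\<^sub>E UNIV. exp (\<Sum>j<N. h (y j)))"
    by (simp add: exp_sum)
  finally show ?thesis ..
qed

lemma sum_seq_type:
  fixes h :: "'b::finite \<Rightarrow> real"
  assumes "N > 0"
  shows "(\<Sum>j<N. h (y j)) = real N * (\<Sum>x\<in>UNIV. seq_type N y x * h x)"
proof -
  have "(\<Sum>j<N. h (y j)) = (\<Sum>x\<in>UNIV. \<Sum>j\<in>{j\<in>{..<N}. y j = x}. h (y j))"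
    by (rule sum.group[symmetric]) auto
  also have "\<dots> = (\<Sum>x\<in>UNIV. real (card {j\<in>{..<N}. y j = x}) * h x)"
    by (intro sum.cong refl) simp
  also have "\<dots> = real N * (\<Sum>x\<in>UNIV. seq_type N y x * h x)"
    unfolding sum_distrib_left seq_type_def using assms by (intro sum.cong refl) simp
  finally show ?thesis .
qed

definition marg :: "nat \<Rightarrow> (nat \<Rightarrow> 'i \<Rightarrow> 'b) \<Rightarrow> 'i \<Rightarrow> nat \<Rightarrow> 'b" where
  "marg N y = (\<lambda>i j. if j < N then y j i else undefined)"

lemma card_lower:
  fixes \<xi> :: "'i::finite \<Rightarrow> nat \<Rightarrow> 'b" and y0 :: "nat \<Rightarrow> 'i \<Rightarrow> 'b"
  assumes \<xi>: "\<And>i. \<xi> i \<in> {..<N} \<rightarrow>\<^sub>E UNIV"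
    and y0: "y0 \<in> {..<N} \<rightarrow>\<^sub>E UNIV"
    and m: "\<And>i. image_mset (\<lambda>x. x i) (mset (map y0 [0..<N])) = mset (map (\<xi> i) [0..<N])"
    and P: "\<And>y. y \<in> Seqs N (mset (map y0 [0..<N])) \<Longrightarrow> P y"
  shows "card (Seqs N (mset (map y0 [0..<N]))) \<le> card {u\<in>Pi\<^sub>E (UNIV::'i set) (\<lambda>i. orb N (\<xi> i)). P (combine N u)}"
proof (rule card_inj_on_le[where f="marg N"])
  let ?S = "Seqs N (mset (map y0 [0..<N]))"
  show "inj_on (marg N) ?S"
  proof (rule inj_onI)
    fix y y' assume y: "y \<in> ?S" and y': "y' \<in> ?S" and e: "marg N y = marg N y'"
    show "y = y'"
    proof (rule PiE_eqI_lt)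
      show "y \<in> {..<N} \<rightarrow>\<^sub>E UNIV" using y by (simp add: Seqs_def)
      show "y' \<in> {..<N} \<rightarrow>\<^sub>E UNIV" using y' by (simp add: Seqs_def)
      fix j assume j: "j < N"
      show "y j = y' j"
      proof
        fix i
        have "marg N y i j = marg N y' i j" using e by simp
        thus "y j i = y' j i" using j by (simp add: marg_def)
      qed
    qed
  qed
  show "marg N ` ?S \<subseteq> {u\<in>Pi\<^sub>E (UNIV::'i set) (\<lambda>i. orb N (\<xi> i)). P (combine N u)}"
  proof
    fix u assume "u \<in> marg N ` ?S"
    then obtain y where y: "y \<in> ?S" and u: "u = marg N y" by blast
    have yP: "y \<in> {..<N} \<rightarrow>\<^sub>E UNIV" and ym: "mset (map y [0..<N]) = mset (map y0 [0..<N])"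
      using y by (auto simp: Seqs_def)
    have c: "combine N u = y"
      by (rule PiE_eqI_lt[OF combine_PiE yP]) (simp add: combine_def u marg_def)
    have "\<forall>i. u i \<in> orb N (\<xi> i)"
    proof
      fix i
      have ui: "u i \<in> {..<N} \<rightarrow>\<^sub>E UNIV" unfolding u marg_def by (rule PiE_I) auto
      have "map (u i) [0..<N] = map (\<lambda>x. x i) (map y [0..<N])" by (simp add: u marg_def)
      hence "mset (map (u i) [0..<N]) = image_mset (\<lambda>x. x i) (mset (map y [0..<N]))"
        by (simp only: mset_map)
      also have "\<dots> = mset (map (\<xi> i) [0..<N])" unfolding ym by (rule m)
      finally show "u i \<in> orb N (\<xi> i)" unfolding orb_eq_Seqs[OF \<xi>] Seqs_def using ui by blast
    qed
    thus "u \<in> {u\<in>Pi\<^sub>E (UNIV::'i set) (\<lambda>i. orb N (\<xi> i)). P (combine N u)}"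
      unfolding PiE_UNIV_iff mem_Collect_eq c using P[OF y] by blast
  qed
  show "finite {u\<in>Pi\<^sub>E (UNIV::'i set) (\<lambda>i. orb N (\<xi> i)). P (combine N u)}"
    by (rule finite_subset[OF _ finite_PiE[of UNIV "\<lambda>i. orb N (\<xi> i)"]]) (auto intro: finite_orb)
qed


lemma xlnx_cont: "(a::real) \<ge> 0 \<Longrightarrow> continuous (at a within {0..}) (\<lambda>x. x * ln x)"
proof -
  assume a: "a \<ge> 0"
  show ?thesis
  proof (cases "a = 0")
    case True
    have "((\<lambda>x::real. x * ln x) \<longlongrightarrow> 0) (at_right 0)" by real_asymp
    hence "((\<lambda>x::real. x * ln x) \<longlongrightarrow> 0 * ln 0) (at 0 within {0..})"
      by (simp add: at_within_Ici_at_right)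
    thus ?thesis unfolding True continuous_within by simp
  next
    case False
    hence "a > 0" using a by simp
    hence "isCont (\<lambda>x. x * ln x) a" by (intro continuous_intros) auto
    thus ?thesis by (rule continuous_at_imp_continuous_at_within)
  qed
qed

lemma entropy_tendsto:
  fixes p :: "nat \<Rightarrow> 'b::finite \<Rightarrow> real"
  assumes lim: "\<And>x. (\<lambda>N. p N x) \<longlonglongrightarrow> q x" and nn: "\<And>N x. p N x \<ge> 0"
  shows "(\<lambda>N. entropy (p N)) \<longlonglongrightarrow> entropy q"
proof -
  have "\<And>x. (\<lambda>N. p N x * ln (p N x)) \<longlonglongrightarrow> q x * ln (q x)"
  proof -
    fix x
    have qx: "q x \<ge> 0" by (rule tendsto_lowerbound[OF lim]) (use nn in auto)
    show "(\<lambda>N. p N x * ln (p N x)) \<longlonglongrightarrow> q x * ln (q x)"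
      by (rule continuous_within_tendsto_compose'[OF xlnx_cont[OF qx] _ lim]) (use nn in auto)
  qed
  thus ?thesis unfolding entropy_def by (intro tendsto_minus tendsto_sum) auto
qed

lemma div_le_aux1: assumes "(n::real) > 0" "n*a - c*b \<le> z" shows "a - c*(b/n) \<le> z/n"
proof -
  have "a - c*(b/n) = (n*a - c*b)/n" using assms(1) by (simp add: field_simps)
  also have "\<dots> \<le> z/n" using assms by (intro divide_right_mono) auto
  finally show ?thesis .
qed

lemma div_le_aux2: assumes "(n::real) > 0" "z \<le> n*a + b" shows "z/n \<le> a + b/n"
proof -
  have "z/n \<le> (n*a + b)/n" using assms by (intro divide_right_mono) auto
  also have "\<dots> = a + b/n" using assms(1) by (simp add: field_simps)
  finally show ?thesis .
qed

lemma ln_card_orb_tendsto: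
  fixes \<xi> :: "nat \<Rightarrow> nat \<Rightarrow> 'b::finite"
  assumes \<xi>: "\<And>N. \<xi> N \<in> {..<N} \<rightarrow>\<^sub>E UNIV"
    and lim: "\<And>t. (\<lambda>N. seq_type N (\<xi> N) t) \<longlonglongrightarrow> m t"
  shows "(\<lambda>N. ln (real (card (orb N (\<xi> N)))) / real N) \<longlonglongrightarrow> entropy m"
proof -
  define C where "C N = mset (map (\<xi> N) [0..<N])" for N
  have card: "card (orb N (\<xi> N)) = card (permutations_of_multiset (C N))" for N
    unfolding orb_eq_Seqs[OF \<xi>] C_def by (rule card_Seqs) simp
  have st: "seq_type N (\<xi> N) t = real (count (C N) t) / real N" for N t
    unfolding C_def by (rule seq_type_mset)
  have E: "(\<lambda>N. entropy (\<lambda>t. real (count (C N) t) / real N)) \<longlonglongrightarrow> entropy m"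
    by (rule entropy_tendsto) (use lim in \<open>simp_all add: st[symmetric] seq_type_def\<close>)
  have r: "(\<lambda>N::nat. (1 + ln (real N)) / real N) \<longlonglongrightarrow> 0" by real_asymp
  have lo0: "(\<lambda>N. entropy (\<lambda>t. real (count (C N) t) / real N) - real CARD('b) * ((1 + ln (real N)) / real N)) \<longlonglongrightarrow> entropy m - real CARD('b) * 0"
    by (intro tendsto_intros E r)
  have up0: "(\<lambda>N. entropy (\<lambda>t. real (count (C N) t) / real N) + (1 + ln (real N)) / real N) \<longlonglongrightarrow> entropy m + 0"
    by (intro tendsto_intros E r)
  have lo: "(\<lambda>N. entropy (\<lambda>t. real (count (C N) t) / real N) - real CARD('b) * ((1 + ln (real N)) / real N)) \<longlonglongrightarrow> entropy m"
    using lo0 by simp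
  have up: "(\<lambda>N. entropy (\<lambda>t. real (count (C N) t) / real N) + (1 + ln (real N)) / real N) \<longlonglongrightarrow> entropy m"
    using up0 by simp
  show ?thesis
  proof (rule real_tendsto_sandwich[OF _ _ lo up])
    show "\<forall>\<^sub>F N in sequentially. entropy (\<lambda>t. real (count (C N) t) / real N) - real CARD('b) * ((1 + ln (real N)) / real N)
        \<le> ln (real (card (orb N (\<xi> N)))) / real N"
    proof (rule eventually_sequentiallyI[of 1])
      fix N :: nat assume N: "1 \<le> N"
      have "real N * entropy (\<lambda>t. real (count (C N) t) / real N) - real CARD('b) * (1 + ln (real N))
           \<le> ln (real (card (permutations_of_multiset (C N))))"
        by (rule multiset_card_bounds(1)) (use N in \<open>auto simp: C_def\<close>)
      thus "entropy (\<lambda>t. real (count (C N) t) / real N) - real CARD('b) * ((1 + ln (real N)) / real N)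
        \<le> ln (real (card (orb N (\<xi> N)))) / real N"
        using N unfolding card by (intro div_le_aux1) auto
    qed
    show "\<forall>\<^sub>F N in sequentially. ln (real (card (orb N (\<xi> N)))) / real N \<le> entropy (\<lambda>t. real (count (C N) t) / real N) + (1 + ln (real N)) / real N"
    proof (rule eventually_sequentiallyI[of 1])
      fix N :: nat assume N: "1 \<le> N"
      have "ln (real (card (permutations_of_multiset (C N)))) \<le> real N * entropy (\<lambda>t. real (count (C N) t) / real N) + 1 + ln (real N)"
        by (rule multiset_card_bounds(2)) (use N in \<open>auto simp: C_def\<close>)
      thus "ln (real (card (orb N (\<xi> N)))) / real N \<le> entropy (\<lambda>t. real (count (C N) t) / real N) + (1 + ln (real N)) / real N"
        using N unfolding card by (intro div_le_aux2) auto
    qed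
  qed
qed


lemma sum_max0_le:
  fixes \<mu> :: "'b \<Rightarrow> real"
  assumes T: "finite T" and e: "\<epsilon> \<ge> 0" and nn: "\<And>x. \<mu> x \<ge> 0"
  shows "(\<Sum>x\<in>T. max 0 (\<mu> x - \<epsilon>)) \<le> max 0 ((\<Sum>x\<in>T. \<mu> x) - \<epsilon>)"
proof -
  define T' where "T' = {x\<in>T. \<mu> x > \<epsilon>}"
  have T'T: "T' \<subseteq> T" by (auto simp: T'_def)
  have fT': "finite T'" using T T'T by (rule finite_subset[rotated])
  have "(\<Sum>x\<in>T. max 0 (\<mu> x - \<epsilon>)) = (\<Sum>x\<in>T'. max 0 (\<mu> x - \<epsilon>))"
    by (rule sum.mono_neutral_right[OF T T'T]) (auto simp: T'_def)
  also have "\<dots> = (\<Sum>x\<in>T'. \<mu> x - \<epsilon>)"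
    by (rule sum.cong) (auto simp: T'_def)
  also have "\<dots> \<le> max 0 ((\<Sum>x\<in>T. \<mu> x) - \<epsilon>)"
  proof (cases "T' = {}")
    case True thus ?thesis by simp
  next
    case False
    hence c: "card T' \<ge> 1" using fT' by (simp add: Suc_le_eq card_gt_0_iff)
    have "(\<Sum>x\<in>T'. \<mu> x - \<epsilon>) = (\<Sum>x\<in>T'. \<mu> x) - real (card T') * \<epsilon>"
      by (simp add: sum_subtractf)
    also have "\<dots> \<le> (\<Sum>x\<in>T. \<mu> x) - \<epsilon>"
    proof -
      have "(\<Sum>x\<in>T'. \<mu> x) \<le> (\<Sum>x\<in>T. \<mu> x)" by (rule sum_mono2[OF T T'T]) (use nn in auto)
      moreover have "\<epsilon> \<le> real (card T') * \<epsilon>" using c e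
        by (metis mult_1 mult_right_mono of_nat_1 of_nat_le_iff)
      ultimately show ?thesis by linarith
    qed
    finally show ?thesis by linarith
  qed
  finally show ?thesis .
qed

lemma size_UNIV: "size (M::'b::finite multiset) = (\<Sum>x\<in>UNIV. count M x)"
proof -
  have "(\<Sum>x\<in>UNIV. count M x) = (\<Sum>x\<in>set_mset M. count M x)"
    by (intro sum.mono_neutral_right) (auto simp: not_in_iff)
  thus ?thesis by (simp add: size_multiset_overloaded_eq)
qed

lemma count_image_UNIV:
  fixes M :: "'b::finite multiset"
  shows "count (image_mset g M) t = (\<Sum>x\<in>{x. g x = t}. count M x)"
proof -
  have "count (image_mset g M) t = (\<Sum>x | x \<in># M \<and> t = g x. count M x)" by (rule count_image_mset')
  also have "\<dots> = (\<Sum>x\<in>{x. g x = t}. count M x)"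
    by (intro sum.mono_neutral_left) (auto simp: not_in_iff)
  finally show ?thesis .
qed

lemma construct_N:
  fixes \<mu> :: "('i::finite \<Rightarrow> 'a::finite) \<Rightarrow> real" and C :: "'i \<Rightarrow> 'a multiset"
  assumes nn: "\<And>x. \<mu> x \<ge> 0" and s1: "(\<Sum>x\<in>UNIV. \<mu> x) = 1" and N: "N > 0" and e: "\<epsilon> \<ge> 0"
    and sz: "\<And>i. size (C i) = N"
    and cl: "\<And>i t. real N * (marginal \<mu> i t - \<epsilon>) \<le> real (count (C i) t)"
  shows "\<exists>ys. length ys = N \<and> (\<forall>i. image_mset (\<lambda>x. x i) (mset ys) = C i) \<and>
           (\<forall>x. \<bar>real (count (mset ys) x) / real N - \<mu> x\<bar> \<le> (1 + real CARD('i \<Rightarrow> 'a)) * (\<epsilon> + 1 / real N))"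
proof -
  define d where "d = real CARD('i \<Rightarrow> 'a)"
  define f where "f x = nat \<lfloor>real N * max 0 (\<mu> x - \<epsilon>)\<rfloor>" for x
  have f_up: "real (f x) \<le> real N * max 0 (\<mu> x - \<epsilon>)" for x
    unfolding f_def by (simp add: of_nat_nat)
  have f_lo: "real (f x) \<ge> real N * max 0 (\<mu> x - \<epsilon>) - 1" for x
    unfolding f_def by (simp add: of_nat_nat)
  define W where "W = (\<Sum>x\<in>UNIV. replicate_mset (f x) x)"
  have cW: "count W x = f x" for x
  proof -
    have "count W x = (\<Sum>y\<in>UNIV. count (replicate_mset (f y) y) x)" unfolding W_def by (rule count_sum)
    also have "\<dots> = (\<Sum>y\<in>UNIV. if y = x then f y else 0)" by (intro sum.cong refl) auto
    also have "\<dots> = f x" by simp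
    finally show ?thesis .
  qed
  have sub: "image_mset (\<lambda>x. x i) W \<subseteq># C i" for i
    unfolding subseteq_mset_def
  proof
    fix t
    have "real (count (image_mset (\<lambda>x. x i) W) t) = (\<Sum>x\<in>{x. x i = t}. real (f x))"
      unfolding count_image_UNIV cW by simp
    also have "\<dots> \<le> (\<Sum>x\<in>{x. x i = t}. real N * max 0 (\<mu> x - \<epsilon>))" by (intro sum_mono f_up)
    also have "\<dots> = real N * (\<Sum>x\<in>{x. x i = t}. max 0 (\<mu> x - \<epsilon>))" by (simp add: sum_distrib_left)
    also have "\<dots> \<le> real N * max 0 ((\<Sum>x\<in>{x. x i = t}. \<mu> x) - \<epsilon>)"
      by (intro mult_left_mono sum_max0_le e nn) auto
    also have "\<dots> = real N * max 0 (marginal \<mu> i t - \<epsilon>)" by (simp add: marginal_def)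
    also have "\<dots> \<le> real (count (C i) t)"
      using cl[of i t] by (cases "marginal \<mu> i t - \<epsilon> \<le> 0") (auto simp: max_def)
    finally show "count (image_mset (\<lambda>x. x i) W) t \<le> count (C i) t" by (simp only: of_nat_le_iff)
  qed
  define L where "L = size W"
  have L_sum: "real L = (\<Sum>x\<in>UNIV. real (f x))" unfolding L_def size_UNIV cW by simp
  define i0 where "i0 = (undefined :: 'i)"
  have "L = size (image_mset (\<lambda>x. x i0) W)" unfolding L_def by simp
  also have "\<dots> \<le> size (C i0)" by (rule size_mset_mono[OF sub])
  finally have LN: "L \<le> N" using sz by simp
  define D where "D i = C i - image_mset (\<lambda>x. x i) W" for i
  have sD: "size (D i) = N - L" for i
    unfolding D_def by (subst size_Diff_submset[OF sub]) (simp add: sz L_def)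
  define s where "s i = (SOME xs. mset xs = D i)" for i
  have ms: "mset (s i) = D i" for i unfolding s_def by (rule someI_ex) (rule ex_mset)
  have ls: "length (s i) = N - L" for i using sD[of i] ms[of i] by (metis size_mset)
  obtain wl where wl: "mset wl = W" using ex_mset by blast
  define Z where "Z = map (\<lambda>j i. s i ! j) [0..<N - L]"
  define ys where "ys = wl @ Z"
  have len: "length ys = N" unfolding ys_def Z_def using LN wl by (simp add: L_def flip: size_mset)
  have marg: "image_mset (\<lambda>x. x i) (mset ys) = C i" for i
  proof -
    have "map (\<lambda>x. x i) Z = map (\<lambda>j. s i ! j) [0..<length (s i)]" unfolding Z_def ls by simp
    also have "\<dots> = s i" by (rule map_nth)
    finally have "image_mset (\<lambda>x. x i) (mset Z) = D i" using ms[of i] by (metis mset_map)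
    hence "image_mset (\<lambda>x. x i) (mset ys) = image_mset (\<lambda>x. x i) W + D i"
      unfolding ys_def by (simp add: wl)
    also have "\<dots> = C i" unfolding D_def by (rule subset_mset.add_diff_inverse[OF sub])
    finally show ?thesis .
  qed
  have NL: "real N - real L \<le> d * (real N * \<epsilon> + 1)"
  proof -
    have "(\<Sum>x\<in>UNIV. real N * (\<mu> x - \<epsilon>) - 1) \<le> real L"
      unfolding L_sum by (intro sum_mono) (use f_lo in \<open>smt (verit, best) mult_left_mono of_nat_0_le_iff max.cobounded2\<close>)
    moreover have "(\<Sum>x\<in>UNIV. real N * (\<mu> x - \<epsilon>) - 1) = real N - d * (real N * \<epsilon> + 1)"
      by (simp add: sum_subtractf sum_distrib_left[symmetric] s1 d_def algebra_simps)
    ultimately show ?thesis by linarith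
  qed
  have bound: "\<bar>real (count (mset ys) x) / real N - \<mu> x\<bar> \<le> (1 + d) * (\<epsilon> + 1 / real N)" for x
  proof -
    have c: "count (mset ys) x = f x + count (mset Z) x" unfolding ys_def by (simp add: wl cW)
    have cz: "real (count (mset Z) x) \<le> real N - real L"
    proof -
      have "count (mset Z) x \<le> size (mset Z)" by (rule count_le_size)
      also have "\<dots> = N - L" by (simp add: Z_def)
      finally show ?thesis using LN by linarith
    qed
    have Npos: "real N > 0" using N by simp
    have u1: "real (f x) \<le> real N * \<mu> x" using f_up[of x] nn[of x] e Npos
      by (smt (verit) max.absorb2 max.cobounded1 mult_left_mono)
    have l1: "real (f x) \<ge> real N * (\<mu> x - \<epsilon>) - 1" using f_lo[of x] Npos
      by (smt (verit) max.cobounded2 mult_left_mono)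
    have A: "real (count (mset ys) x) \<le> real N * \<mu> x + d * (real N * \<epsilon> + 1)"
      using c cz u1 NL by simp
    have B: "real (count (mset ys) x) \<ge> real N * \<mu> x - (real N * \<epsilon> + 1)"
      using c l1 by (simp add: algebra_simps)
    have dnn: "d \<ge> 0" by (simp add: d_def)
    have "real (count (mset ys) x) / real N - \<mu> x \<le> d * (\<epsilon> + 1 / real N)"
    proof -
      have "real (count (mset ys) x) / real N \<le> (real N * \<mu> x + d * (real N * \<epsilon> + 1)) / real N"
        using A Npos by (intro divide_right_mono) auto
      also have "\<dots> = \<mu> x + d * (\<epsilon> + 1 / real N)" using Npos by (simp add: field_simps)
      finally show ?thesis by simp
    qed
    moreover have "\<mu> x - real (count (mset ys) x) / real N \<le> \<epsilon> + 1 / real N"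
    proof -
      have "(real N * \<mu> x - (real N * \<epsilon> + 1)) / real N \<le> real (count (mset ys) x) / real N"
        using B Npos by (intro divide_right_mono) auto
      also have "(real N * \<mu> x - (real N * \<epsilon> + 1)) / real N = \<mu> x - (\<epsilon> + 1 / real N)"
        using Npos by (simp add: field_simps)
      finally show ?thesis by simp
    qed
    moreover have k0: "\<epsilon> + 1 / real N \<ge> 0" using e Npos by simp
    moreover have "d * (\<epsilon> + 1 / real N) \<ge> 0" using dnn k0 by simp
    moreover have "(1 + d) * (\<epsilon> + 1 / real N) = (\<epsilon> + 1 / real N) + d * (\<epsilon> + 1 / real N)"
      by (simp add: distrib_right)
    ultimately show ?thesis unfolding abs_le_iff by (intro conjI; linarith)
  qed
  show ?thesis using len marg bound unfolding d_def by blast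
qed


lemma typebound:
  fixes \<mu> :: "'b::finite \<Rightarrow> real"
  assumes y: "y \<in> Delta \<mu> N \<delta>"
  shows "(\<Sum>x\<in>UNIV. seq_type N y x * h x) \<ge> (\<Sum>x\<in>UNIV. h x * \<mu> x) - \<delta> * (\<Sum>x\<in>UNIV. \<bar>h x\<bar>)"
proof -
  have "(\<Sum>x\<in>UNIV. h x * \<mu> x) - \<delta> * (\<Sum>x\<in>UNIV. \<bar>h x\<bar>) = (\<Sum>x\<in>UNIV. h x * \<mu> x - \<delta> * \<bar>h x\<bar>)"
    by (simp add: sum_subtractf sum_distrib_left)
  also have "\<dots> \<le> (\<Sum>x\<in>UNIV. seq_type N y x * h x)"
  proof (rule sum_mono)
    fix x
    have d: "\<bar>seq_type N y x - \<mu> x\<bar> < \<delta>" using y by (simp add: Delta_def)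
    have "\<bar>(seq_type N y x - \<mu> x) * h x\<bar> \<le> \<delta> * \<bar>h x\<bar>"
      unfolding abs_mult using d by (intro mult_right_mono) auto
    thus "h x * \<mu> x - \<delta> * \<bar>h x\<bar> \<le> seq_type N y x * h x"
      by (simp add: abs_le_iff algebra_simps)
  qed
  finally show ?thesis .
qed

locale misetup =
  fixes \<mu> :: "('i::finite \<Rightarrow> 'a::{finite,linorder}) \<Rightarrow> real"
    and \<Xi> :: "nat \<Rightarrow> 'i \<Rightarrow> nat \<Rightarrow> 'a"
  assumes prob: "is_prob \<mu>"
    and ap: "approx_seq (marginal \<mu>) \<Xi>"

context misetup
begin

lemma nn: "\<mu> x \<ge> 0" using prob by (simp add: is_prob_def)
lemma s1: "(\<Sum>x\<in>UNIV. \<mu> x) = 1" using prob by (simp add: is_prob_def)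
lemma XiP: "\<Xi> N i \<in> {..<N} \<rightarrow>\<^sub>E UNIV" using ap by (simp add: approx_seq_def sorted_seq_def)
lemma conv: "(\<lambda>N. seq_type N (\<Xi> N i) t) \<longlonglongrightarrow> marginal \<mu> i t" using ap by (simp add: approx_seq_def)

definition PO :: "nat \<Rightarrow> real" where
  "PO N = (\<Prod>i\<in>UNIV. real (card (orb N (\<Xi> N i))))"

definition TT :: "nat \<Rightarrow> ('i \<Rightarrow> nat \<Rightarrow> 'a) set" where
  "TT N = Pi\<^sub>E UNIV (\<lambda>i. orb N (\<Xi> N i))"

definition SM :: real where "SM = (\<Sum>i\<in>UNIV. entropy (marginal \<mu> i))"

lemma PO_pos: "PO N > 0"
  unfolding PO_def by (intro prod_pos) (use card_orb_pos[OF XiP] in simp)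

lemma LO_tendsto: "(\<lambda>N. ln (PO N) / real N) \<longlonglongrightarrow> SM"
proof -
  have "ln (PO N) / real N = (\<Sum>i\<in>UNIV. ln (real (card (orb N (\<Xi> N i)))) / real N)" for N
    unfolding PO_def by (subst ln_prod) (use card_orb_pos[OF XiP] in \<open>auto simp: sum_divide_distrib\<close>)
  moreover have "(\<lambda>N. \<Sum>i\<in>UNIV. ln (real (card (orb N (\<Xi> N i)))) / real N) \<longlonglongrightarrow> SM"
    unfolding SM_def by (intro tendsto_sum ln_card_orb_tendsto XiP conv)
  ultimately show ?thesis by simp
qed

lemma avgP_eq:
  "(1 / (fact N) ^ CARD('i)) * (\<Sum>\<sigma>s\<in>(UNIV::'i set) \<rightarrow>\<^sub>E perms N.
         exp (\<Sum>j<N. h (combine N (\<lambda>i. perm_act N (\<sigma>s i) (\<Xi> N i)) j)))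
   = (1 / PO N) * (\<Sum>u\<in>TT N. exp (\<Sum>j<N. h (combine N u j)))"
  unfolding PO_def TT_def
  by (rule avg_prod_orb[OF XiP, where F="\<lambda>u. exp (\<Sum>j<N. h (combine N u j))"])

lemma gamma_eq:
  "gamma_sym \<mu> \<Xi> N \<delta> = real (card {u\<in>TT N. combine N u \<in> Delta \<mu> N \<delta>}) / PO N"
proof -
  have fS: "finite ((UNIV::'i set) \<rightarrow>\<^sub>E perms N)" by (intro finite_PiE finite_perms) auto
  have fT: "finite (TT N)" unfolding TT_def by (intro finite_PiE finite_orb) auto
  have "real (card (Delta_sym \<mu> \<Xi> N \<delta>)) = (\<Sum>\<sigma>s\<in>(UNIV::'i set) \<rightarrow>\<^sub>E perms N.
          (\<lambda>u. if combine N u \<in> Delta \<mu> N \<delta> then 1 else 0) (\<lambda>i. perm_act N (\<sigma>s i) (\<Xi> N i)))"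
    unfolding Delta_sym_def using fS by (simp add: sum.If_cases Int_def)
  hence "gamma_sym \<mu> \<Xi> N \<delta> = (1 / PO N) * (\<Sum>u\<in>TT N. if combine N u \<in> Delta \<mu> N \<delta> then 1 else 0)"
    unfolding gamma_sym_def PO_def TT_def
    using avg_prod_orb[OF XiP, of N "\<lambda>u. if combine N u \<in> Delta \<mu> N \<delta> then 1 else 0"] by simp
  also have "(\<Sum>u\<in>TT N. if combine N u \<in> Delta \<mu> N \<delta> then 1 else (0::real)) = real (card {u\<in>TT N. combine N u \<in> Delta \<mu> N \<delta>})"
    using fT by (simp add: sum.If_cases Int_def)
  finally show ?thesis by simp
qed

definition Zf :: "(('i \<Rightarrow> 'a) \<Rightarrow> real) \<Rightarrow> real" where
  "Zf h = (\<Sum>x\<in>UNIV. exp (h x))"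

definition Hf :: "(('i \<Rightarrow> 'a) \<Rightarrow> real) \<Rightarrow> real" where
  "Hf h = (\<Sum>x\<in>UNIV. \<bar>h x\<bar>)"

definition muf :: "(('i \<Rightarrow> 'a) \<Rightarrow> real) \<Rightarrow> real" where
  "muf h = (\<Sum>x\<in>UNIV. h x * \<mu> x)"

lemma Zf_pos: "Zf h > 0"
  unfolding Zf_def by (intro sum_pos) auto

lemma U1: "(\<Sum>u\<in>TT N. exp (\<Sum>j<N. h (combine N u j))) \<le> Zf h ^ N"
proof -
  have "(\<Sum>u\<in>TT N. exp (\<Sum>j<N. h (combine N u j))) \<le> (\<Sum>y\<in>{..<N} \<rightarrow>\<^sub>E UNIV. exp (\<Sum>j<N. h (y j)))"
    unfolding TT_def by (rule sum_combine_le[where w="\<lambda>y. exp (\<Sum>j<N. h (y j))"]) simp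
  also have "\<dots> = Zf h ^ N" unfolding Zf_def by (rule sum_exp_PiE)
  finally show ?thesis .
qed

lemma sum_h_Delta:
  assumes "N > 0" "y \<in> Delta \<mu> N \<delta>"
  shows "(\<Sum>j<N. h (y j)) \<ge> real N * (muf h - \<delta> * Hf h)"
proof -
  have "(\<Sum>j<N. h (y j)) = real N * (\<Sum>x\<in>UNIV. seq_type N y x * h x)" by (rule sum_seq_type[OF assms(1)])
  moreover have "(\<Sum>x\<in>UNIV. seq_type N y x * h x) \<ge> muf h - \<delta> * Hf h"
    unfolding muf_def Hf_def by (rule typebound[OF assms(2)])
  ultimately show ?thesis using assms(1) by (simp add: mult_left_mono)
qed

lemma L2:
  assumes "N > 0"
  shows "real (card {u\<in>TT N. combine N u \<in> Delta \<mu> N \<delta>}) * exp (real N * (muf h - \<delta> * Hf h))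
     \<le> (\<Sum>u\<in>TT N. exp (\<Sum>j<N. h (combine N u j)))"
proof -
  have fT: "finite (TT N)" unfolding TT_def by (intro finite_PiE finite_orb) auto
  have "real (card {u\<in>TT N. combine N u \<in> Delta \<mu> N \<delta>}) * exp (real N * (muf h - \<delta> * Hf h))
      = (\<Sum>u\<in>{u\<in>TT N. combine N u \<in> Delta \<mu> N \<delta>}. exp (real N * (muf h - \<delta> * Hf h)))" by simp
  also have "\<dots> \<le> (\<Sum>u\<in>{u\<in>TT N. combine N u \<in> Delta \<mu> N \<delta>}. exp (\<Sum>j<N. h (combine N u j)))"
    by (intro sum_mono) (use sum_h_Delta[OF assms] in auto)
  also have "\<dots> \<le> (\<Sum>u\<in>TT N. exp (\<Sum>j<N. h (combine N u j)))"
    by (rule sum_mono2[OF fT]) auto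
  finally show ?thesis .
qed

end


context misetup
begin

lemma exists_yseq:
  "\<exists>y. (\<forall>N. y N \<in> {..<N} \<rightarrow>\<^sub>E UNIV) \<and>
       (\<forall>N i. image_mset (\<lambda>x. x i) (mset (map (y N) [0..<N])) = mset (map (\<Xi> N i) [0..<N])) \<and>
       (\<forall>x. (\<lambda>N. seq_type N (y N) x) \<longlonglongrightarrow> \<mu> x)"
proof -
  define C where "C N i = mset (map (\<Xi> N i) [0..<N])" for N i
  have sz: "size (C N i) = N" for N i by (simp add: C_def)
  define eps where "eps N = (\<Sum>i\<in>UNIV. \<Sum>t\<in>UNIV. \<bar>real (count (C N i) t) / real N - marginal \<mu> i t\<bar>)" for N
  have eps_nn: "eps N \<ge> 0" for N unfolding eps_def by (intro sum_nonneg) auto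
  have eps_b: "\<bar>real (count (C N i) t) / real N - marginal \<mu> i t\<bar> \<le> eps N" for N i t
  proof -
    have "\<bar>real (count (C N i) t) / real N - marginal \<mu> i t\<bar> \<le> (\<Sum>t\<in>UNIV. \<bar>real (count (C N i) t) / real N - marginal \<mu> i t\<bar>)"
      by (rule member_le_sum) auto
    also have "\<dots> \<le> eps N" unfolding eps_def
      by (rule member_le_sum[of i UNIV "\<lambda>i. \<Sum>t\<in>UNIV. \<bar>real (count (C N i) t) / real N - marginal \<mu> i t\<bar>"]) (auto intro: sum_nonneg)
    finally show ?thesis .
  qed
  have eps_lim: "eps \<longlonglongrightarrow> 0"
  proof -
    have "(\<lambda>N. \<Sum>i\<in>UNIV. \<Sum>t\<in>UNIV. \<bar>real (count (C N i) t) / real N - marginal \<mu> i t\<bar>) \<longlonglongrightarrow> (\<Sum>i\<in>(UNIV::'i set). \<Sum>t\<in>(UNIV::'a set). \<bar>0::real\<bar>)"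
    proof (intro tendsto_sum tendsto_rabs)
      fix i t
      have "(\<lambda>N. seq_type N (\<Xi> N i) t) \<longlonglongrightarrow> marginal \<mu> i t" by (rule conv)
      hence "(\<lambda>N. seq_type N (\<Xi> N i) t - marginal \<mu> i t) \<longlonglongrightarrow> 0" by (rule LIM_zero)
      thus "(\<lambda>N. real (count (C N i) t) / real N - marginal \<mu> i t) \<longlonglongrightarrow> 0"
        by (simp add: C_def seq_type_mset)
    qed
    thus ?thesis unfolding eps_def by simp
  qed
  define d where "d = real CARD('i \<Rightarrow> 'a)"
  define P where "P N ys \<longleftrightarrow> length ys = N \<and> (\<forall>i. image_mset (\<lambda>x. x i) (mset ys) = C N i) \<and>
           (\<forall>x. \<bar>real (count (mset ys) x) / real N - \<mu> x\<bar> \<le> (1 + d) * (eps N + 1 / real N))" for N ys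
  have exP: "\<exists>ys. P N ys" if N: "N > 0" for N
    unfolding P_def d_def
  proof (rule construct_N[OF nn s1 N eps_nn sz])
    fix i t
    have "marginal \<mu> i t - eps N \<le> real (count (C N i) t) / real N" using eps_b[of N i t] by linarith
    hence "real N * (marginal \<mu> i t - eps N) \<le> real N * (real (count (C N i) t) / real N)"
      by (rule mult_left_mono) simp
    thus "real N * (marginal \<mu> i t - eps N) \<le> real (count (C N i) t)" using N by simp
  qed
  define ys where "ys N = (if N = 0 then [] else SOME ys. P N ys)" for N
  have Pys: "P N (ys N)" if "N > 0" for N
    using someI_ex[OF exP[OF that]] that by (simp add: ys_def)
  have len: "length (ys N) = N" for N
    by (cases "N = 0") (use Pys in \<open>auto simp: ys_def P_def\<close>)
  define y where "y N = fromlist N (ys N)" for N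
  have my: "map (y N) [0..<N] = ys N" for N unfolding y_def using len[of N] by (rule map_fromlist)
  have A: "\<forall>N. y N \<in> {..<N} \<rightarrow>\<^sub>E UNIV" unfolding y_def by (intro allI fromlist_PiE)
  have B: "\<forall>N i. image_mset (\<lambda>x. x i) (mset (map (y N) [0..<N])) = mset (map (\<Xi> N i) [0..<N])"
  proof (intro allI)
    fix N i
    show "image_mset (\<lambda>x. x i) (mset (map (y N) [0..<N])) = mset (map (\<Xi> N i) [0..<N])"
    proof (cases "N = 0")
      case True thus ?thesis by simp
    next
      case False
      thus ?thesis using Pys[of N] unfolding my P_def C_def by simp
    qed
  qed
  have Cc: "\<forall>x. (\<lambda>N. seq_type N (y N) x) \<longlonglongrightarrow> \<mu> x"
  proof
    fix x
    have g: "(\<lambda>N. (1 + d) * (eps N + 1 / real N)) \<longlonglongrightarrow> (1 + d) * (0 + 0)"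
      by (intro tendsto_intros eps_lim lim_1_over_n)
    have "(\<lambda>N. seq_type N (y N) x - \<mu> x) \<longlonglongrightarrow> 0"
    proof (rule Lim_null_comparison[OF _ g[simplified]])
      show "\<forall>\<^sub>F N in sequentially. norm (seq_type N (y N) x - \<mu> x) \<le> (1 + d) * (eps N + 1 / real N)"
      proof (rule eventually_sequentiallyI[of 1])
        fix N :: nat assume "1 \<le> N"
        hence "P N (ys N)" by (intro Pys) simp
        thus "norm (seq_type N (y N) x - \<mu> x) \<le> (1 + d) * (eps N + 1 / real N)"
          unfolding seq_type_mset my P_def real_norm_def by blast
      qed
    qed
    thus "(\<lambda>N. seq_type N (y N) x) \<longlonglongrightarrow> \<mu> x" by (rule LIM_zero_cancel)
  qed
  show ?thesis using A B Cc by blast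
qed

end


context misetup
begin

definition Y :: "nat \<Rightarrow> nat \<Rightarrow> 'i \<Rightarrow> 'a" where
  "Y = (SOME y. (\<forall>N. y N \<in> {..<N} \<rightarrow>\<^sub>E UNIV) \<and>
       (\<forall>N i. image_mset (\<lambda>x. x i) (mset (map (y N) [0..<N])) = mset (map (\<Xi> N i) [0..<N])) \<and>
       (\<forall>x. (\<lambda>N. seq_type N (y N) x) \<longlonglongrightarrow> \<mu> x))"

lemma Y_props: "(\<forall>N. Y N \<in> {..<N} \<rightarrow>\<^sub>E UNIV) \<and>
       (\<forall>N i. image_mset (\<lambda>x. x i) (mset (map (Y N) [0..<N])) = mset (map (\<Xi> N i) [0..<N])) \<and>
       (\<forall>x. (\<lambda>N. seq_type N (Y N) x) \<longlonglongrightarrow> \<mu> x)"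
  unfolding Y_def by (rule someI_ex[OF exists_yseq])

lemma Y_PiE: "Y N \<in> {..<N} \<rightarrow>\<^sub>E UNIV" using Y_props by blast
lemma Y_marg: "image_mset (\<lambda>x. x i) (mset (map (Y N) [0..<N])) = mset (map (\<Xi> N i) [0..<N])"
  using Y_props by blast
lemma Y_conv: "(\<lambda>N. seq_type N (Y N) x) \<longlonglongrightarrow> \<mu> x" using Y_props by blast

lemma aY_tendsto: "(\<lambda>N. ln (real (card (orb N (Y N)))) / real N) \<longlonglongrightarrow> entropy \<mu>"
  by (rule ln_card_orb_tendsto[OF Y_PiE Y_conv])

lemma Y_Delta:
  assumes "\<delta> > 0"
  shows "\<forall>\<^sub>F N in sequentially. N > 0 \<and> real (card (orb N (Y N))) \<le> real (card {u\<in>TT N. combine N u \<in> Delta \<mu> N \<delta>})"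
proof -
  have "\<forall>\<^sub>F N in sequentially. \<forall>x. dist (seq_type N (Y N) x) (\<mu> x) < \<delta>"
    by (intro eventually_all_finite tendstoD[OF Y_conv assms])
  moreover have "\<forall>\<^sub>F N in sequentially. N > 0" by (rule eventually_gt_at_top)
  ultimately show ?thesis
  proof eventually_elim
    case (elim N)
    have "card (Seqs N (mset (map (Y N) [0..<N]))) \<le> card {u\<in>Pi\<^sub>E UNIV (\<lambda>i. orb N (\<Xi> N i)). combine N u \<in> Delta \<mu> N \<delta>}"
    proof (rule card_lower[OF XiP Y_PiE Y_marg])
      fix y' assume y': "y' \<in> Seqs N (mset (map (Y N) [0..<N]))"
      hence y'P: "y' \<in> {..<N} \<rightarrow>\<^sub>E UNIV" and m: "mset (map y' [0..<N]) = mset (map (Y N) [0..<N])"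
        by (auto simp: Seqs_def)
      have "\<forall>t. \<bar>seq_type N y' t - \<mu> t\<bar> < \<delta>"
      proof
        fix t
        have "seq_type N y' t = seq_type N (Y N) t" unfolding seq_type_mset m ..
        thus "\<bar>seq_type N y' t - \<mu> t\<bar> < \<delta>" using elim(1) by (simp add: dist_real_def)
      qed
      thus "y' \<in> Delta \<mu> N \<delta>" unfolding Delta_def using y'P by blast
    qed
    hence "card (orb N (Y N)) \<le> card {u\<in>TT N. combine N u \<in> Delta \<mu> N \<delta>}"
      unfolding orb_eq_Seqs[OF Y_PiE] TT_def .
    thus ?case using elim(2) by simp
  qed
qed

abbreviation FF :: "real \<Rightarrow> ereal" where
  "FF \<delta> \<equiv> limsup (\<lambda>N. ereal (1 / real N) * eln (gamma_sym \<mu> \<Xi> N \<delta>))"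

lemma C1:
  assumes "\<delta> > 0"
  shows "ereal (entropy \<mu> - SM) \<le> FF \<delta>"
proof -
  have lim: "(\<lambda>N. ereal (ln (real (card (orb N (Y N)))) / real N - ln (PO N) / real N)) \<longlonglongrightarrow> ereal (entropy \<mu> - SM)"
    by (intro tendsto_ereal tendsto_diff aY_tendsto LO_tendsto)
  have "ereal (entropy \<mu> - SM) = limsup (\<lambda>N. ereal (ln (real (card (orb N (Y N)))) / real N - ln (PO N) / real N))"
    by (rule lim_imp_Limsup[OF _ lim, symmetric]) simp
  also have "\<dots> \<le> FF \<delta>"
  proof (rule Limsup_mono)
    show "\<forall>\<^sub>F N in sequentially. ereal (ln (real (card (orb N (Y N)))) / real N - ln (PO N) / real N) \<le> ereal (1 / real N) * eln (gamma_sym \<mu> \<Xi> N \<delta>)"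
      using Y_Delta[OF assms]
    proof eventually_elim
      case (elim N)
      have N: "N > 0" and c: "real (card (orb N (Y N))) \<le> real (card {u\<in>TT N. combine N u \<in> Delta \<mu> N \<delta>})"
        using elim by auto
      have co: "real (card (orb N (Y N))) > 0" using card_orb_pos[OF Y_PiE] by simp
      have P: "PO N > 0" by (rule PO_pos)
      have g: "gamma_sym \<mu> \<Xi> N \<delta> \<ge> real (card (orb N (Y N))) / PO N"
        unfolding gamma_eq using c P by (intro divide_right_mono) auto
      have gp: "gamma_sym \<mu> \<Xi> N \<delta> > 0" using g co P by (meson divide_pos_pos less_le_trans)
      have "ln (real (card (orb N (Y N)))) - ln (PO N) \<le> ln (gamma_sym \<mu> \<Xi> N \<delta>)"
        using ln_le_cancel_iff[of "real (card (orb N (Y N))) / PO N" "gamma_sym \<mu> \<Xi> N \<delta>"] g co P gp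
        by (simp add: ln_div)
      hence "(ln (real (card (orb N (Y N)))) - ln (PO N)) / real N \<le> ln (gamma_sym \<mu> \<Xi> N \<delta>) / real N"
        by (rule divide_right_mono) simp
      hence "ln (real (card (orb N (Y N)))) / real N - ln (PO N) / real N \<le> 1 / real N * ln (gamma_sym \<mu> \<Xi> N \<delta>)"
        by (simp add: diff_divide_distrib)
      thus ?case using gp by (simp add: eln_def)
    qed
  qed
  finally show ?thesis .
qed

lemma C2:
  assumes "\<delta> > 0"
  shows "FF \<delta> \<le> ereal (ln (Zf h) - muf h + \<delta> * Hf h - SM)"
proof -
  have lim: "(\<lambda>N. ereal (ln (Zf h) - muf h + \<delta> * Hf h - ln (PO N) / real N)) \<longlonglongrightarrow> ereal (ln (Zf h) - muf h + \<delta> * Hf h - SM)"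
    by (intro tendsto_ereal tendsto_diff tendsto_const LO_tendsto)
  have "FF \<delta> \<le> limsup (\<lambda>N. ereal (ln (Zf h) - muf h + \<delta> * Hf h - ln (PO N) / real N))"
  proof (rule Limsup_mono)
    show "\<forall>\<^sub>F N in sequentially. ereal (1 / real N) * eln (gamma_sym \<mu> \<Xi> N \<delta>) \<le> ereal (ln (Zf h) - muf h + \<delta> * Hf h - ln (PO N) / real N)"
      using eventually_gt_at_top[of 0]
    proof eventually_elim
      case (elim N)
      hence N: "real N > 0" by simp
      show ?case
      proof (cases "gamma_sym \<mu> \<Xi> N \<delta> > 0")
        case False
        thus ?thesis using N by (simp add: eln_def)
      next
        case True
        let ?c = "real (card {u\<in>TT N. combine N u \<in> Delta \<mu> N \<delta>})"
        have P: "PO N > 0" by (rule PO_pos)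
        have ge: "gamma_sym \<mu> \<Xi> N \<delta> = ?c / PO N" by (rule gamma_eq)
        have cp: "?c > 0" using True P ge by (simp add: zero_less_divide_iff)
        have "?c * exp (real N * (muf h - \<delta> * Hf h)) \<le> Zf h ^ N"
          using L2[OF elim, where \<delta>=\<delta> and h=h] U1[where N=N and h=h] by linarith
        hence "ln (?c * exp (real N * (muf h - \<delta> * Hf h))) \<le> ln (Zf h ^ N)"
          using cp Zf_pos[of h] by (subst ln_le_cancel_iff) auto
        hence "ln ?c + real N * (muf h - \<delta> * Hf h) \<le> real N * ln (Zf h)"
          using cp Zf_pos[of h] by (simp add: ln_mult ln_realpow)
        hence "ln (gamma_sym \<mu> \<Xi> N \<delta>) \<le> real N * (ln (Zf h) - muf h + \<delta> * Hf h) - ln (PO N)"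
          unfolding ge using cp P by (simp add: ln_div algebra_simps)
        hence "ln (gamma_sym \<mu> \<Xi> N \<delta>) / real N \<le> (real N * (ln (Zf h) - muf h + \<delta> * Hf h) - ln (PO N)) / real N"
          by (rule divide_right_mono) simp
        also have "\<dots> = ln (Zf h) - muf h + \<delta> * Hf h - ln (PO N) / real N"
          using N by (simp add: field_simps)
        finally have "1 / real N * ln (gamma_sym \<mu> \<Xi> N \<delta>) \<le> ln (Zf h) - muf h + \<delta> * Hf h - ln (PO N) / real N"
          by simp
        thus ?thesis using True by (simp add: eln_def)
      qed
    qed
  qed
  also have "\<dots> = ereal (ln (Zf h) - muf h + \<delta> * Hf h - SM)"
    by (rule lim_imp_Limsup[OF _ lim]) simp
  finally show ?thesis .
qed

end


context misetup
begin

definition AV :: "(('i \<Rightarrow> 'a) \<Rightarrow> real) \<Rightarrow> nat \<Rightarrow> real" where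
  "AV h N = (1 / PO N) * (\<Sum>u\<in>TT N. exp (\<Sum>j<N. h (combine N u j)))"

lemma P_sym_AV: "P_sym h \<Xi> = limsup (\<lambda>N. ereal (1 / real N * ln (AV h N)))"
  unfolding P_sym_def AV_def avgP_eq ..

lemma Xi_TT: "\<Xi> N \<in> TT N"
  unfolding TT_def PiE_UNIV_iff using xi_in_orb[OF XiP] by blast

lemma AV_pos: "AV h N > 0"
proof -
  have fT: "finite (TT N)" unfolding TT_def by (intro finite_PiE finite_orb) auto
  have "(\<Sum>u\<in>TT N. exp (\<Sum>j<N. h (combine N u j))) > 0"
    using Xi_TT fT by (intro sum_pos) auto
  thus ?thesis unfolding AV_def using PO_pos by simp
qed

lemma P_upper: "P_sym h \<Xi> \<le> ereal (ln (Zf h) - SM)"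
proof -
  have lim: "(\<lambda>N. ereal (ln (Zf h) - ln (PO N) / real N)) \<longlonglongrightarrow> ereal (ln (Zf h) - SM)"
    by (intro tendsto_ereal tendsto_diff tendsto_const LO_tendsto)
  have "P_sym h \<Xi> \<le> limsup (\<lambda>N. ereal (ln (Zf h) - ln (PO N) / real N))"
    unfolding P_sym_AV
  proof (rule Limsup_mono)
    show "\<forall>\<^sub>F N in sequentially. ereal (1 / real N * ln (AV h N)) \<le> ereal (ln (Zf h) - ln (PO N) / real N)"
      using eventually_gt_at_top[of 0]
    proof eventually_elim
      case (elim N)
      hence N: "real N > 0" by simp
      have P: "PO N > 0" by (rule PO_pos)
      have "AV h N \<le> Zf h ^ N / PO N"
        unfolding AV_def using U1[where N=N and h=h] P by (simp add: divide_right_mono)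
      hence "ln (AV h N) \<le> ln (Zf h ^ N / PO N)"
        using AV_pos[of h N] P Zf_pos[of h] by (subst ln_le_cancel_iff) auto
      also have "\<dots> = real N * ln (Zf h) - ln (PO N)"
        using P Zf_pos[of h] by (simp add: ln_div ln_realpow)
      finally have "ln (AV h N) / real N \<le> (real N * ln (Zf h) - ln (PO N)) / real N"
        by (rule divide_right_mono) simp
      also have "\<dots> = ln (Zf h) - ln (PO N) / real N" using N by (simp add: field_simps)
      finally show ?case by simp
    qed
  qed
  also have "\<dots> = ereal (ln (Zf h) - SM)" by (rule lim_imp_Limsup[OF _ lim]) simp
  finally show ?thesis .
qed

lemma P_lower:
  assumes "\<delta> > 0"
  shows "ereal (muf h - \<delta> * Hf h + entropy \<mu> - SM) \<le> P_sym h \<Xi>"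
proof -
  have lim: "(\<lambda>N. ereal (ln (real (card (orb N (Y N)))) / real N - ln (PO N) / real N + (muf h - \<delta> * Hf h)))
       \<longlonglongrightarrow> ereal (entropy \<mu> - SM + (muf h - \<delta> * Hf h))"
    by (intro tendsto_ereal tendsto_add tendsto_diff aY_tendsto LO_tendsto tendsto_const)
  have "ereal (muf h - \<delta> * Hf h + entropy \<mu> - SM) = limsup (\<lambda>N. ereal (ln (real (card (orb N (Y N)))) / real N - ln (PO N) / real N + (muf h - \<delta> * Hf h)))"
    by (subst lim_imp_Limsup[OF _ lim]) (simp_all add: algebra_simps)
  also have "\<dots> \<le> P_sym h \<Xi>"
    unfolding P_sym_AV
  proof (rule Limsup_mono)
    show "\<forall>\<^sub>F N in sequentially. ereal (ln (real (card (orb N (Y N)))) / real N - ln (PO N) / real N + (muf h - \<delta> * Hf h)) \<le> ereal (1 / real N * ln (AV h N))"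
      using Y_Delta[OF assms]
    proof eventually_elim
      case (elim N)
      have N0: "N > 0" and c: "real (card (orb N (Y N))) \<le> real (card {u\<in>TT N. combine N u \<in> Delta \<mu> N \<delta>})"
        using elim by auto
      have N: "real N > 0" using N0 by simp
      have co: "real (card (orb N (Y N))) > 0" using card_orb_pos[OF Y_PiE] by simp
      have P: "PO N > 0" by (rule PO_pos)
      have "real (card (orb N (Y N))) * exp (real N * (muf h - \<delta> * Hf h)) \<le>
            real (card {u\<in>TT N. combine N u \<in> Delta \<mu> N \<delta>}) * exp (real N * (muf h - \<delta> * Hf h))"
        using c by (intro mult_right_mono) auto
      also have "\<dots> \<le> (\<Sum>u\<in>TT N. exp (\<Sum>j<N. h (combine N u j)))" by (rule L2[OF N0])
      finally have "real (card (orb N (Y N))) * exp (real N * (muf h - \<delta> * Hf h)) / PO N \<le> AV h N"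
        unfolding AV_def using P by (simp add: divide_right_mono)
      hence "ln (real (card (orb N (Y N))) * exp (real N * (muf h - \<delta> * Hf h)) / PO N) \<le> ln (AV h N)"
        using AV_pos[of h N] P co by (subst ln_le_cancel_iff) auto
      hence "ln (real (card (orb N (Y N)))) + real N * (muf h - \<delta> * Hf h) - ln (PO N) \<le> ln (AV h N)"
        using P co by (simp add: ln_div ln_mult)
      hence "(ln (real (card (orb N (Y N)))) + real N * (muf h - \<delta> * Hf h) - ln (PO N)) / real N \<le> ln (AV h N) / real N"
        by (rule divide_right_mono) simp
      moreover have "(ln (real (card (orb N (Y N)))) + real N * (muf h - \<delta> * Hf h) - ln (PO N)) / real N
          = ln (real (card (orb N (Y N)))) / real N - ln (PO N) / real N + (muf h - \<delta> * Hf h)"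
        using N by (simp add: field_simps)
      ultimately show ?case by simp
    qed
  qed
  finally show ?thesis .
qed

lemma hM_exists:
  assumes e: "\<epsilon> > 0"
  shows "\<exists>h. muf h = - entropy \<mu> \<and> ln (Zf h) \<le> \<epsilon>"
proof -
  define d where "d = real CARD('i \<Rightarrow> 'a)"
  have d: "d > 0" by (simp add: d_def)
  define M where "M = ln (d / \<epsilon>)"
  define h where "h x = (if \<mu> x > 0 then ln (\<mu> x) else - M)" for x
  have em: "exp (- M) = \<epsilon> / d" unfolding M_def using d e by (simp add: exp_minus exp_ln)
  have "muf h = (\<Sum>x\<in>UNIV. \<mu> x * ln (\<mu> x))"
    unfolding muf_def
  proof (intro sum.cong refl)
    fix x
    show "h x * \<mu> x = \<mu> x * ln (\<mu> x)"
    proof (cases "\<mu> x > 0")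
      case True thus ?thesis by (simp add: h_def)
    next
      case False hence "\<mu> x = 0" using nn[of x] by simp
      thus ?thesis by simp
    qed
  qed
  hence mu: "muf h = - entropy \<mu>" by (simp add: entropy_def)
  have "Zf h \<le> (\<Sum>x\<in>UNIV. \<mu> x + exp (- M))"
    unfolding Zf_def
  proof (intro sum_mono)
    fix x
    show "exp (h x) \<le> \<mu> x + exp (- M)"
    proof (cases "\<mu> x > 0")
      case True thus ?thesis by (simp add: h_def)
    next
      case False thus ?thesis using nn[of x] by (simp add: h_def)
    qed
  qed
  also have "\<dots> = 1 + d * exp (- M)" by (simp add: sum.distrib s1 d_def)
  also have "\<dots> = 1 + \<epsilon>" using em d by simp
  finally have "Zf h \<le> 1 + \<epsilon>" .
  moreover have "ln (Zf h) \<le> Zf h - 1" using Zf_pos[of h] by (rule ln_le_minus_one)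
  ultimately have "ln (Zf h) \<le> \<epsilon>" by simp
  thus ?thesis using mu by blast
qed

lemma I_sym_val: "I_sym \<mu> \<Xi> = ereal (- entropy \<mu> + SM)"
proof -
  let ?c = "entropy \<mu> - SM"
  have evpos: "\<forall>\<^sub>F \<delta> in at_right (0::real). \<delta> > 0"
    unfolding eventually_at_right_field by (intro exI[of _ 1]) auto
  have "(FF \<longlongrightarrow> ereal ?c) (at_right 0)"
  proof (rule order_tendstoI)
    fix a assume a: "a < ereal ?c"
    show "\<forall>\<^sub>F \<delta> in at_right 0. a < FF \<delta>"
      using evpos by eventually_elim (use C1 a in \<open>auto intro: less_le_trans\<close>)
  next
    fix a assume a: "ereal ?c < a"
    obtain \<epsilon> where e: "\<epsilon> > 0" and ea: "ereal (?c + \<epsilon>) < a"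
    proof (cases a)
      case (real r)
      have "?c < r" using a real by simp
      hence "(r - ?c) / 2 > 0" "ereal (?c + (r - ?c) / 2) < a" using real by (simp_all add: field_simps)
      thus ?thesis by (rule that)
    next
      case PInf thus ?thesis using that[of 1] by simp
    next
      case MInf thus ?thesis using a by simp
    qed
    obtain h where mu: "muf h = - entropy \<mu>" and lz: "ln (Zf h) \<le> \<epsilon> / 2"
      using hM_exists[of "\<epsilon> / 2"] e by auto
    define \<delta>0 where "\<delta>0 = \<epsilon> / (2 * (Hf h + 1))"
    have Hnn: "Hf h \<ge> 0" unfolding Hf_def by (intro sum_nonneg) auto
    have d0: "\<delta>0 > 0" unfolding \<delta>0_def using e Hnn by simp
    show "\<forall>\<^sub>F \<delta> in at_right 0. FF \<delta> < a"
      unfolding eventually_at_right_field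
    proof (intro exI[of _ \<delta>0] conjI allI impI)
      show "0 < \<delta>0" by (rule d0)
      fix \<delta> :: real assume dp: "0 < \<delta>" and dl: "\<delta> < \<delta>0"
      have "\<delta> * Hf h \<le> \<delta>0 * Hf h" using dl Hnn by (intro mult_right_mono) auto
      also have "\<delta>0 * Hf h \<le> \<epsilon> / 2"
      proof -
        have "\<delta>0 * Hf h \<le> \<delta>0 * (Hf h + 1)" using d0 by simp
        also have "\<dots> = \<epsilon> / 2" unfolding \<delta>0_def using Hnn by (simp add: field_simps)
        finally show ?thesis .
      qed
      finally have dH: "\<delta> * Hf h \<le> \<epsilon> / 2" .
      have "FF \<delta> \<le> ereal (ln (Zf h) - muf h + \<delta> * Hf h - SM)" by (rule C2[OF dp])
      also have "\<dots> \<le> ereal (?c + \<epsilon>)" using mu lz dH by simp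
      finally show "FF \<delta> < a" using ea by (rule le_less_trans)
    qed
  qed
  hence "Lim (at_right (0::real)) FF = ereal ?c"
    by (rule tendsto_Lim[rotated]) simp
  thus ?thesis unfolding I_sym_def by simp
qed

lemma calI_val: "calI_sym \<mu> \<Xi> = ereal (- entropy \<mu> + SM)"
proof (rule antisym)
  show "calI_sym \<mu> \<Xi> \<le> ereal (- entropy \<mu> + SM)"
    unfolding calI_sym_def
  proof (rule SUP_least)
    fix h :: "('i \<Rightarrow> 'a) \<Rightarrow> real"
    have Hnn: "Hf h \<ge> 0" unfolding Hf_def by (intro sum_nonneg) auto
    have PL: "ereal (muf h + entropy \<mu> - SM) \<le> P_sym h \<Xi>"
    proof (rule ereal_le_epsilon2)
      fix e :: real assume e: "e > 0"
      define \<delta> where "\<delta> = e / (Hf h + 1)"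
      have dp: "\<delta> > 0" unfolding \<delta>_def using e Hnn by simp
      have dH: "\<delta> * Hf h \<le> e"
      proof -
        have "\<delta> * Hf h \<le> \<delta> * (Hf h + 1)" using dp by simp
        also have "\<dots> = e" unfolding \<delta>_def using Hnn by (simp add: field_simps)
        finally show ?thesis .
      qed
      have "ereal (muf h + entropy \<mu> - SM) = ereal (muf h - \<delta> * Hf h + entropy \<mu> - SM) + ereal (\<delta> * Hf h)"
        by simp
      also have "\<dots> \<le> P_sym h \<Xi> + ereal e"
        using P_lower[OF dp, of h] dH by (intro add_mono) auto
      finally show "ereal (muf h + entropy \<mu> - SM) \<le> P_sym h \<Xi> + ereal e" .
    qed
    have "ereal (\<Sum>x\<in>UNIV. h x * \<mu> x) - P_sym h \<Xi> \<le> ereal (muf h) - ereal (muf h + entropy \<mu> - SM)"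
      unfolding muf_def[symmetric] by (rule ereal_minus_mono[OF order.refl PL])
    also have "\<dots> = ereal (- entropy \<mu> + SM)" by simp
    finally show "ereal (\<Sum>x\<in>UNIV. h x * \<mu> x) - P_sym h \<Xi> \<le> ereal (- entropy \<mu> + SM)" .
  qed
  show "ereal (- entropy \<mu> + SM) \<le> calI_sym \<mu> \<Xi>"
  proof (rule ereal_le_epsilon2)
    fix e :: real assume e: "e > 0"
    obtain h where mu: "muf h = - entropy \<mu>" and lz: "ln (Zf h) \<le> e"
      using hM_exists[OF e] by auto
    have "ereal (- entropy \<mu> + SM - e) \<le> ereal (muf h) - ereal (ln (Zf h) - SM)"
      using mu lz by simp
    also have "\<dots> \<le> ereal (muf h) - P_sym h \<Xi>"
      by (rule ereal_minus_mono[OF order.refl P_upper])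
    also have "\<dots> \<le> calI_sym \<mu> \<Xi>"
      unfolding calI_sym_def muf_def by (rule SUP_upper) simp
    finally have "ereal (- entropy \<mu> + SM - e) \<le> calI_sym \<mu> \<Xi>" .
    hence "ereal (- entropy \<mu> + SM - e) + ereal e \<le> calI_sym \<mu> \<Xi> + ereal e" by (rule add_right_mono)
    thus "ereal (- entropy \<mu> + SM) \<le> calI_sym \<mu> \<Xi> + ereal e" by simp
  qed
qed

end

theorem theorem4p5:
  fixes \<mu> :: "('i::finite \<Rightarrow> 'a::{finite,linorder}) \<Rightarrow> real"
    and \<Xi> :: "nat \<Rightarrow> 'i \<Rightarrow> nat \<Rightarrow> 'a"
  assumes "is_prob \<mu>"
    and "approx_seq (marginal \<mu>) \<Xi>"
  shows "calI_sym \<mu> \<Xi> = I_sym \<mu> \<Xi> \<and>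
         I_sym \<mu> \<Xi> = ereal (- entropy \<mu> + (\<Sum>i\<in>UNIV. entropy (marginal \<mu> i)))"
proof -
  interpret misetup \<mu> \<Xi> using assms by unfold_locales
  show ?thesis using calI_val I_sym_val unfolding SM_def by simp
qed


end
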